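(* Let $\mathbb{F}$ be a field of characteristic zero, let $d\geq 2$ and $t\geq 1$ be integers, and let $\mathfrak{n}_{d,t}$ be the free $t$-step nilpotent Lie algebra over $\mathbb{F}$ on $d$ generators. Let $\mathfrak{t}$ be an ideal of $\mathfrak{n}_{d,t}$ such that $\mathfrak{t}\subseteq \mathfrak{n}_{d,t}^2$ and $\mathfrak{n}_{d,t}^t\not\subseteq \mathfrak{t}$. Define $$\mathrm{Aut}_{\mathfrak{t}}\,\mathfrak{n}_{d,t}=\{\Phi\in\mathrm{Aut}\,\mathfrak{n}_{d,t}:\ \Phi(\mathfrak{t})\subseteq\mathfrak{t}\},\qquad \mathrm{Aut}^\circ_{\mathfrak{t}}\,\mathfrak{n}_{d,t}=\{\Phi\in\mathrm{Aut}\,\mathfrak{n}_{d,t}:\ \mathrm{Im}(\Phi-\mathrm{Id})\subseteq\mathfrak{t}\}.$$ Then $\mathrm{Aut}^\circ_{\mathfrak{t}}\,\mathfrak{n}_{d,t}$ is a normal subgroup of $\mathrm{Aut}_{\mathfrak{t}}\,\mathfrak{n}_{d,t}$, and the automorphism group $\mathrm{Aut}\,\dfrac{\mathfrak{n}_{d,t}}{\mathfrak{t}}$ of the quotient Lie algebra is isomorphic to the quotient group $\dfrac{\mathrm{Aut}_{\mathfrak{t}}\,\mathfrak{n}_{d,t}}{\mathrm{Aut}^\circ_{\mathfrak{t}}\,\mathfrak{n}_{d,t}}$.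
   Context: All vector spaces are finite-dimensional. For a Lie algebra $\mathfrak{n}$, the lower central series is $\mathfrak{n}^1=\mathfrak{n}$, $\mathfrak{n}^{i+1}=[\mathfrak{n},\mathfrak{n}^i]$. The free $t$-step nilpotent Lie algebra on a set $U=\{x_1,\dots,x_d\}$ is $\mathfrak{n}_{d,t}=\mathfrak{FL}(U)/\mathfrak{FL}(U)^{t+1}$, where $\mathfrak{FL}(U)$ is the free Lie algebra over $\mathbb{F}$ generated by $U$. $\mathrm{Aut}\,\mathfrak{n}$ denotes the group of Lie algebra automorphisms of $\mathfrak{n}$. *)

theory Defs
  imports "HOL-Algebra.Algebra"
begin

record ('k, 'a) alg =
  lcarrier :: "'a set"
  lzero :: 'a
  ladd :: "'a \<Rightarrow> 'a \<Rightarrow> 'a"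
  lsmult :: "'k \<Rightarrow> 'a \<Rightarrow> 'a"
  lbr :: "'a \<Rightarrow> 'a \<Rightarrow> 'a"

definition lsub :: "('k::field, 'a) alg \<Rightarrow> 'a \<Rightarrow> 'a \<Rightarrow> 'a" where
  "lsub L x y = ladd L x (lsmult L (-1) y)"

definition subspace_of :: "('k::field, 'a) alg \<Rightarrow> 'a set \<Rightarrow> bool" where
  "subspace_of L V \<longleftrightarrow> V \<subseteq> lcarrier L \<and> lzero L \<in> V \<and>
     (\<forall>x\<in>V. \<forall>y\<in>V. ladd L x y \<in> V) \<and> (\<forall>c. \<forall>x\<in>V. lsmult L c x \<in> V)"

definition lspan :: "('k::field, 'a) alg \<Rightarrow> 'a set \<Rightarrow> 'a set" where
  "lspan L S = \<Inter>{V. subspace_of L V \<and> S \<subseteq> V}"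

definition lie_ideal :: "('k::field, 'a) alg \<Rightarrow> 'a set \<Rightarrow> bool" where
  "lie_ideal L I \<longleftrightarrow> subspace_of L I \<and> (\<forall>x\<in>lcarrier L. \<forall>y\<in>I. lbr L x y \<in> I)"

definition two_sided_ideal :: "('k::field, 'a) alg \<Rightarrow> 'a set \<Rightarrow> bool" where
  "two_sided_ideal L I \<longleftrightarrow> subspace_of L I \<and>
     (\<forall>x\<in>lcarrier L. \<forall>y\<in>I. lbr L x y \<in> I \<and> lbr L y x \<in> I)"

text \<open>Lower central series: lcs L 1 = L, lcs L (i+1) = [L, lcs L i] (span of brackets).
  (Index 0 is given the value L as well; it is never used.)\<close>
primrec lcs :: "('k::field, 'a) alg \<Rightarrow> nat \<Rightarrow> 'a set" where
  "lcs L 0 = lcarrier L"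
| "lcs L (Suc i) = (if i = 0 then lcarrier L
      else lspan L {lbr L x y | x y. x \<in> lcarrier L \<and> y \<in> lcs L i})"

definition lcoset :: "('k::field, 'a) alg \<Rightarrow> 'a set \<Rightarrow> 'a \<Rightarrow> 'a set" where
  "lcoset L I x = (\<lambda>i. ladd L x i) ` I"

definition lrep :: "'a set \<Rightarrow> 'a" where
  "lrep A = (SOME x. x \<in> A)"

definition lie_quot :: "('k::field, 'a) alg \<Rightarrow> 'a set \<Rightarrow> ('k, 'a set) alg" where
  "lie_quot L I = \<lparr> lcarrier = lcoset L I ` lcarrier L,
      lzero = lcoset L I (lzero L),
      ladd = (\<lambda>A B. lcoset L I (ladd L (lrep A) (lrep B))),
      lsmult = (\<lambda>c A. lcoset L I (lsmult L c (lrep A))),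
      lbr = (\<lambda>A B. lcoset L I (lbr L (lrep A) (lrep B))) \<rparr>"

definition lie_auts :: "('k::field, 'a) alg \<Rightarrow> ('a \<Rightarrow> 'a) set" where
  "lie_auts L = {f \<in> Bij (lcarrier L).
      (\<forall>x\<in>lcarrier L. \<forall>y\<in>lcarrier L. f (ladd L x y) = ladd L (f x) (f y)) \<and>
      (\<forall>c. \<forall>x\<in>lcarrier L. f (lsmult L c x) = lsmult L c (f x)) \<and>
      (\<forall>x\<in>lcarrier L. \<forall>y\<in>lcarrier L. f (lbr L x y) = lbr L (f x) (f y))}"

definition Aut :: "('k::field, 'a) alg \<Rightarrow> ('a \<Rightarrow> 'a) monoid" where
  "Aut L = (BijGroup (lcarrier L)) \<lparr>carrier := lie_auts L\<rparr>"

definition Aut_t :: "('k::field, 'a) alg \<Rightarrow> 'a set \<Rightarrow> ('a \<Rightarrow> 'a) monoid" where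
  "Aut_t L T = (Aut L) \<lparr>carrier := {\<Phi> \<in> carrier (Aut L). \<Phi> ` T \<subseteq> T}\<rparr>"

definition Aut0_t :: "('k::field, 'a) alg \<Rightarrow> 'a set \<Rightarrow> ('a \<Rightarrow> 'a) set" where
  "Aut0_t L T = {\<Phi> \<in> carrier (Aut L). (\<lambda>x. lsub L (\<Phi> x) x) ` lcarrier L \<subseteq> T}"

text \<open>Free magma on generators 0..d-1 (binary trees), and the free non-associative
  algebra on it: finitely supported coefficient functions on trees with leaves < d.
  The product is the bilinear extension of tree grafting.\<close>
datatype tree = Leaf nat | Node tree tree

primrec leaves :: "tree \<Rightarrow> nat set" where
  "leaves (Leaf i) = {i}"
| "leaves (Node a b) = leaves a \<union> leaves b"

definition free_magma_alg :: "nat \<Rightarrow> ('k::field, tree \<Rightarrow> 'k) alg" where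
  "free_magma_alg d = \<lparr> lcarrier = {f. finite {s. f s \<noteq> 0} \<and> (\<forall>s. f s \<noteq> 0 \<longrightarrow> leaves s \<subseteq> {..<d})},
      lzero = (\<lambda>_. 0),
      ladd = (\<lambda>f g s. f s + g s),
      lsmult = (\<lambda>c f s. c * f s),
      lbr = (\<lambda>f g s. case s of Leaf _ \<Rightarrow> 0 | Node a b \<Rightarrow> f a * g b) \<rparr>"

definition lie_relations :: "('k::field, 'a) alg \<Rightarrow> 'a set" where
  "lie_relations M = {lbr M a a | a. a \<in> lcarrier M} \<union>
     {ladd M (ladd M (lbr M a (lbr M b c)) (lbr M b (lbr M c a))) (lbr M c (lbr M a b))
        | a b c. a \<in> lcarrier M \<and> b \<in> lcarrier M \<and> c \<in> lcarrier M}"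

definition gen_two_sided_ideal :: "('k::field, 'a) alg \<Rightarrow> 'a set \<Rightarrow> 'a set" where
  "gen_two_sided_ideal M S = \<Inter>{I. two_sided_ideal M I \<and> S \<subseteq> I}"

text \<open>Free Lie algebra FL(U) on U = {x_0, ..., x_(d-1)} (x_i the class of Leaf i).\<close>
definition free_lie :: "nat \<Rightarrow> ('k::field, (tree \<Rightarrow> 'k) set) alg" where
  "free_lie d = lie_quot (free_magma_alg d)
      (gen_two_sided_ideal (free_magma_alg d) (lie_relations (free_magma_alg d)))"

definition free_nilpotent :: "nat \<Rightarrow> nat \<Rightarrow> ('k::field, (tree \<Rightarrow> 'k) set set) alg" where
  "free_nilpotent d t = lie_quot (free_lie d) (lcs (free_lie d) (t + 1))"

end

theory Submission
  imports Defs "Jordan_Normal_Form.VS_Connect" "Jordan_Normal_Form.Missing_VectorSpace"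
begin

declare lcs.simps(2)[simp del]

lemma lcs_1_gen[simp]: "lcs L (Suc 0) = lcarrier L" by (simp add: lcs.simps(2))
lemma lcs_SS_gen: "lcs L (Suc (Suc i)) = lspan L {lbr L x y | x y. x \<in> lcarrier L \<and> y \<in> lcs L (Suc i)}"
  by (simp add: lcs.simps(2))

locale nalg =
  fixes L :: "('k::field, 'a) alg"
  assumes zero_cl[simp, intro]: "lzero L \<in> lcarrier L"
  and add_cl[simp, intro]: "x \<in> lcarrier L \<Longrightarrow> y \<in> lcarrier L \<Longrightarrow> ladd L x y \<in> lcarrier L"
  and sm_cl[simp, intro]: "x \<in> lcarrier L \<Longrightarrow> lsmult L c x \<in> lcarrier L"
  and br_cl[simp, intro]: "x \<in> lcarrier L \<Longrightarrow> y \<in> lcarrier L \<Longrightarrow> lbr L x y \<in> lcarrier L"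
  and add_assoc: "x \<in> lcarrier L \<Longrightarrow> y \<in> lcarrier L \<Longrightarrow> z \<in> lcarrier L \<Longrightarrow>
      ladd L (ladd L x y) z = ladd L x (ladd L y z)"
  and add_comm: "x \<in> lcarrier L \<Longrightarrow> y \<in> lcarrier L \<Longrightarrow> ladd L x y = ladd L y x"
  and add_zero[simp]: "x \<in> lcarrier L \<Longrightarrow> ladd L x (lzero L) = x"
  and add_neg[simp]: "x \<in> lcarrier L \<Longrightarrow> ladd L x (lsmult L (-1) x) = lzero L"
  and sm_add: "x \<in> lcarrier L \<Longrightarrow> y \<in> lcarrier L \<Longrightarrow>
      lsmult L c (ladd L x y) = ladd L (lsmult L c x) (lsmult L c y)"
  and add_sm: "x \<in> lcarrier L \<Longrightarrow> lsmult L (a + b) x = ladd L (lsmult L a x) (lsmult L b x)"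
  and sm_sm[simp]: "x \<in> lcarrier L \<Longrightarrow> lsmult L a (lsmult L b x) = lsmult L (a * b) x"
  and sm_one[simp]: "x \<in> lcarrier L \<Longrightarrow> lsmult L 1 x = x"
  and br_add_l: "x \<in> lcarrier L \<Longrightarrow> y \<in> lcarrier L \<Longrightarrow> z \<in> lcarrier L \<Longrightarrow>
      lbr L (ladd L x y) z = ladd L (lbr L x z) (lbr L y z)"
  and br_add_r: "x \<in> lcarrier L \<Longrightarrow> y \<in> lcarrier L \<Longrightarrow> z \<in> lcarrier L \<Longrightarrow>
      lbr L x (ladd L y z) = ladd L (lbr L x y) (lbr L x z)"
  and br_sm_l: "x \<in> lcarrier L \<Longrightarrow> y \<in> lcarrier L \<Longrightarrow> lbr L (lsmult L c x) y = lsmult L c (lbr L x y)"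
  and br_sm_r: "x \<in> lcarrier L \<Longrightarrow> y \<in> lcarrier L \<Longrightarrow> lbr L x (lsmult L c y) = lsmult L c (lbr L x y)"
begin

abbreviation "C \<equiv> lcarrier L"
abbreviation "pl \<equiv> ladd L"
abbreviation "sm \<equiv> lsmult L"
abbreviation "br \<equiv> lbr L"
abbreviation "zr \<equiv> lzero L"
abbreviation "ng x \<equiv> lsmult L (-1) x"

lemma add_lcomm: "x \<in> C \<Longrightarrow> y \<in> C \<Longrightarrow> z \<in> C \<Longrightarrow> pl x (pl y z) = pl y (pl x z)"
  by (metis add_assoc add_comm)

lemmas add_ac = add_assoc add_comm add_lcomm

lemma zero_add[simp]: "x \<in> C \<Longrightarrow> pl zr x = x"
  using add_comm add_zero by auto

lemma neg_add[simp]: "x \<in> C \<Longrightarrow> pl (ng x) x = zr"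
  using add_comm add_neg by (metis sm_cl)

lemma pl_neg_cancel1[simp]: "x \<in> C \<Longrightarrow> y \<in> C \<Longrightarrow> pl x (pl (ng x) y) = y"
  by (metis add_assoc add_neg sm_cl zero_add)

lemma pl_neg_cancel2[simp]: "x \<in> C \<Longrightarrow> y \<in> C \<Longrightarrow> pl (ng x) (pl x y) = y"
  by (metis add_assoc neg_add sm_cl zero_add)

lemma add_cancel_left: "a \<in> C \<Longrightarrow> x \<in> C \<Longrightarrow> y \<in> C \<Longrightarrow> pl a x = pl a y \<Longrightarrow> x = y"
  by (metis pl_neg_cancel2)

lemma add_left_cancel_iff[simp]: "a \<in> C \<Longrightarrow> x \<in> C \<Longrightarrow> y \<in> C \<Longrightarrow> (pl a x = pl a y) = (x = y)"
  using add_cancel_left by blast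

lemma add_self_zero: "x \<in> C \<Longrightarrow> pl x x = x \<Longrightarrow> x = zr"
  by (metis add_cancel_left add_zero zero_cl)

lemma sm_zero_left[simp]: "x \<in> C \<Longrightarrow> sm 0 x = zr"
  by (metis add_self_zero add_sm add_0 sm_cl)

lemma sm_zero_right[simp]: "sm c zr = zr"
  by (metis add_self_zero add_zero sm_add sm_cl zero_cl)

lemma br_zero_l[simp]: "x \<in> C \<Longrightarrow> br zr x = zr"
  by (metis add_self_zero add_zero br_add_l br_cl zero_cl)

lemma br_zero_r[simp]: "x \<in> C \<Longrightarrow> br x zr = zr"
  by (metis add_self_zero add_zero br_add_r br_cl zero_cl)

lemma neg_neg[simp]: "x \<in> C \<Longrightarrow> ng (ng x) = x"
  by simp

lemma neg_zero[simp]: "ng zr = zr" by simp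

lemma sub_def': "lsub L x y = pl x (ng y)" by (simp add: lsub_def)

lemma sub_cl[simp, intro]: "x \<in> C \<Longrightarrow> y \<in> C \<Longrightarrow> lsub L x y \<in> C"
  by (simp add: lsub_def)

lemma sub_self[simp]: "x \<in> C \<Longrightarrow> lsub L x x = zr"
  by (simp add: lsub_def)

lemma sub_decomp: "x \<in> C \<Longrightarrow> y \<in> C \<Longrightarrow> pl y (lsub L x y) = x"
  unfolding lsub_def by (metis add_lcomm add_neg add_zero sm_cl)

lemma sub_eq_zero_iff: "x \<in> C \<Longrightarrow> y \<in> C \<Longrightarrow> (lsub L x y = zr) = (x = y)"
  by (metis add_zero sub_decomp sub_self)

lemma sum_zero_neg: "x \<in> C \<Longrightarrow> y \<in> C \<Longrightarrow> pl x y = zr \<Longrightarrow> y = ng x"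
  by (metis add_zero pl_neg_cancel2 sm_cl)

lemma neg_pl: "x \<in> C \<Longrightarrow> y \<in> C \<Longrightarrow> ng (pl x y) = pl (ng x) (ng y)"
  by (simp add: sm_add)

lemma sm_neg: "x \<in> C \<Longrightarrow> sm c (ng x) = ng (sm c x)"
  by (simp add: mult.commute)

lemma sub_pl_pl: "a \<in> C \<Longrightarrow> b \<in> C \<Longrightarrow> c \<in> C \<Longrightarrow> d \<in> C \<Longrightarrow>
    lsub L (pl a b) (pl c d) = pl (lsub L a c) (lsub L b d)"
  unfolding lsub_def by (simp add: sm_add add_ac)

lemma sub_sm: "a \<in> C \<Longrightarrow> b \<in> C \<Longrightarrow> lsub L (sm c a) (sm c b) = sm c (lsub L a b)"
  unfolding lsub_def by (simp add: sm_add mult.commute)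

lemma sub_br: "a \<in> C \<Longrightarrow> b \<in> C \<Longrightarrow> c \<in> C \<Longrightarrow> d \<in> C \<Longrightarrow>
    lsub L (br a b) (br c d) = pl (br (lsub L a c) b) (br c (lsub L b d))"
proof -
  assume a: "a \<in> C" "b \<in> C" "c \<in> C" "d \<in> C"
  have "pl (br (lsub L a c) b) (br c (lsub L b d)) =
     pl (pl (br a b) (ng (br c b))) (pl (br c b) (ng (br c d)))"
    using a unfolding lsub_def by (simp add: br_add_l br_add_r br_sm_l br_sm_r)
  also have "\<dots> = pl (br a b) (ng (br c d))"
    using a by (simp add: add_assoc)
  finally show ?thesis unfolding lsub_def by simp
qed

lemma neg_sub: "x \<in> C \<Longrightarrow> y \<in> C \<Longrightarrow> ng (lsub L x y) = lsub L y x"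
  unfolding lsub_def by (simp add: sm_add add_comm)

lemma subspaceD:
  assumes "subspace_of L V"
  shows "V \<subseteq> C" "zr \<in> V" "\<And>x y. x \<in> V \<Longrightarrow> y \<in> V \<Longrightarrow> pl x y \<in> V"
    "\<And>x c. x \<in> V \<Longrightarrow> sm c x \<in> V"
  using assms unfolding subspace_of_def by auto

lemma subspace_sub: "subspace_of L V \<Longrightarrow> x \<in> V \<Longrightarrow> y \<in> V \<Longrightarrow> lsub L x y \<in> V"
  unfolding lsub_def subspace_of_def by auto

lemma carrier_subspace: "subspace_of L C"
  unfolding subspace_of_def by auto

lemma zero_subspace: "subspace_of L {zr}"
  unfolding subspace_of_def by auto

lemma lspan_subspace: "S \<subseteq> C \<Longrightarrow> subspace_of L (lspan L S)"
proof -
  assume S: "S \<subseteq> C"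
  have "lspan L S \<subseteq> C" unfolding lspan_def using carrier_subspace S by blast
  moreover have "zr \<in> lspan L S" unfolding lspan_def subspace_of_def by blast
  moreover have "\<forall>x\<in>lspan L S. \<forall>y\<in>lspan L S. pl x y \<in> lspan L S"
    unfolding lspan_def subspace_of_def by blast
  moreover have "\<forall>c. \<forall>x\<in>lspan L S. sm c x \<in> lspan L S"
    unfolding lspan_def subspace_of_def by blast
  ultimately show ?thesis unfolding subspace_of_def by blast
qed

lemma lspan_least: "subspace_of L V \<Longrightarrow> S \<subseteq> V \<Longrightarrow> lspan L S \<subseteq> V"
  unfolding lspan_def by blast

lemma lspan_inc: "S \<subseteq> lspan L S"
  unfolding lspan_def by blast

lemma lspan_mono: "S \<subseteq> C \<Longrightarrow> S \<subseteq> S' \<Longrightarrow> S' \<subseteq> C \<Longrightarrow> lspan L S \<subseteq> lspan L S'"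
  by (meson lspan_inc lspan_least lspan_subspace order_trans)

lemmas lcs_SS = lcs_SS_gen[of L]

lemma lcs_subspace: "subspace_of L (lcs L k)"
proof (induction k)
  case 0 then show ?case by (simp add: carrier_subspace)
next
  case (Suc k)
  show ?case
  proof (cases k)
    case 0 then show ?thesis by (simp add: carrier_subspace)
  next
    case (Suc j)
    have "{br x y | x y. x \<in> C \<and> y \<in> lcs L (Suc j)} \<subseteq> C"
      using subspaceD(1)[OF Suc.IH] Suc by auto
    then have "subspace_of L (lcs L (Suc (Suc j)))"
      unfolding lcs_SS by (rule lspan_subspace)
    then show ?thesis unfolding Suc .
  qed
qed

lemma lcs_carrier: "lcs L k \<subseteq> C" by (rule subspaceD(1)[OF lcs_subspace])

lemma lcs_br: "x \<in> C \<Longrightarrow> y \<in> lcs L (Suc k) \<Longrightarrow> br x y \<in> lcs L (Suc (Suc k))"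
proof -
  assume "x \<in> C" "y \<in> lcs L (Suc k)"
  then have "br x y \<in> {br x y | x y. x \<in> C \<and> y \<in> lcs L (Suc k)}" by blast
  then show ?thesis unfolding lcs_SS by (rule subsetD[OF lspan_inc])
qed

lemma lcs_SS_least: "subspace_of L V \<Longrightarrow> (\<And>x y. x \<in> C \<Longrightarrow> y \<in> lcs L (Suc k) \<Longrightarrow> br x y \<in> V)
   \<Longrightarrow> lcs L (Suc (Suc k)) \<subseteq> V"
  unfolding lcs_SS by (rule lspan_least) blast+

lemma lcs_Suc_sub: "lcs L (Suc k) \<subseteq> lcs L k"
proof (induction k)
  case 0 then show ?case by simp
next
  case (Suc k)
  show ?case
  proof (cases k)
    case 0 then show ?thesis using lcs_carrier by simp
  next
    case (Suc j)
    have "lcs L (Suc (Suc (Suc j))) \<subseteq> lcs L (Suc (Suc j))"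
    proof (rule lcs_SS_least[OF lcs_subspace])
      fix x y assume "x \<in> C" "y \<in> lcs L (Suc (Suc j))"
      then have "y \<in> lcs L (Suc j)" using Suc.IH Suc by blast
      then show "br x y \<in> lcs L (Suc (Suc j))" using lcs_br \<open>x \<in> C\<close> by blast
    qed
    then show ?thesis unfolding Suc .
  qed
qed

lemma lcs_antimono: "i \<le> j \<Longrightarrow> lcs L j \<subseteq> lcs L i"
proof (induction j rule: dec_induct)
  case base then show ?case by simp
next
  case (step n) then show ?case using lcs_Suc_sub[of n] by blast
qed

end

locale lie = nalg +
  assumes br_self[simp]: "x \<in> lcarrier L \<Longrightarrow> lbr L x x = lzero L"
  and jacobi: "x \<in> lcarrier L \<Longrightarrow> y \<in> lcarrier L \<Longrightarrow> z \<in> lcarrier L \<Longrightarrow>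
    ladd L (ladd L (lbr L x (lbr L y z)) (lbr L y (lbr L z x))) (lbr L z (lbr L x y)) = lzero L"
begin

lemma antisym: "x \<in> C \<Longrightarrow> y \<in> C \<Longrightarrow> br y x = ng (br x y)"
proof -
  assume a: "x \<in> C" "y \<in> C"
  have "zr = br (pl x y) (pl x y)" using a by simp
  also have "\<dots> = pl (br x (pl x y)) (br y (pl x y))"
    using a by (intro br_add_l) auto
  also have "\<dots> = pl (pl (br x x) (br x y)) (pl (br y x) (br y y))"
    using a by (simp only: br_add_r)
  also have "\<dots> = pl (br x y) (br y x)" using a by simp
  finally have eq: "pl (br x y) (br y x) = zr" by simp
  show ?thesis by (rule sum_zero_neg[OF _ _ eq]) (use a in simp_all)
qed

lemma jacobi': "a \<in> C \<Longrightarrow> b \<in> C \<Longrightarrow> y \<in> C \<Longrightarrow> br (br a b) y = pl (br a (br b y)) (br b (br y a))"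
proof -
  assume a: "a \<in> C" "b \<in> C" "y \<in> C"
  have "br y (br a b) = ng (pl (br a (br b y)) (br b (br y a)))"
    using sum_zero_neg[OF _ _ jacobi[OF a]] a by simp
  then show ?thesis using a antisym[of y "br a b"] by simp
qed

lemma lcs_ideal: "two_sided_ideal L (lcs L k)"
  unfolding two_sided_ideal_def
proof (intro conjI ballI)
  show "subspace_of L (lcs L k)" by (rule lcs_subspace)
  fix x y assume x: "x \<in> C" and y: "y \<in> lcs L k"
  have yC: "y \<in> C" using y lcs_carrier by auto
  have 1: "br x y \<in> lcs L k"
  proof (cases k)
    case 0 then show ?thesis using x yC by simp
  next
    case (Suc j)
    then show ?thesis using lcs_br[OF x] y lcs_Suc_sub by blast
  qed
  show "br x y \<in> lcs L k" by (rule 1)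
  show "br y x \<in> lcs L k" using antisym[OF x yC] 1 subspaceD(4)[OF lcs_subspace] by simp
qed

lemma lcs_bracket:
  "x \<in> lcs L (Suc i) \<Longrightarrow> y \<in> lcs L (Suc j) \<Longrightarrow> br x y \<in> lcs L (Suc (Suc (i + j)))"
proof (induction i arbitrary: j x y)
  case 0
  then show ?case using lcs_br[of x y j] by simp
next
  case (Suc i)
  have yC: "y \<in> C" using Suc.prems lcs_carrier by auto
  let ?V = "{x \<in> C. br x y \<in> lcs L (Suc (Suc (Suc i + j)))}"
  have sV: "subspace_of L ?V"
    using subspaceD[OF lcs_subspace[of "Suc (Suc (Suc i + j))"]] yC
    unfolding subspace_of_def by (auto simp: br_add_l br_sm_l)
  have "lcs L (Suc (Suc i)) \<subseteq> ?V"
  proof (rule lcs_SS_least[OF sV])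
    fix a b assume a: "a \<in> C" and b: "b \<in> lcs L (Suc i)"
    have bC: "b \<in> C" using b lcs_carrier by auto
    have 1: "br a (br b y) \<in> lcs L (Suc (Suc (Suc i + j)))"
      using lcs_br[OF a Suc.IH[OF b Suc.prems(2)]] by simp
    have ya: "br y a \<in> lcs L (Suc (Suc j))"
      using antisym[OF a yC] lcs_br[OF a Suc.prems(2)] subspaceD(4)[OF lcs_subspace] by simp
    have 2: "br b (br y a) \<in> lcs L (Suc (Suc (Suc i + j)))"
      using Suc.IH[OF b ya] by simp
    show "br a b \<in> ?V"
      using jacobi'[OF a bC yC] 1 2 subspaceD[OF lcs_subspace] a bC yC by simp
  qed
  then show ?case using Suc.prems by auto
qed

end


definition is_lin :: "('k::field, 'a) alg \<Rightarrow> ('k, 'b) alg \<Rightarrow> ('a \<Rightarrow> 'b) \<Rightarrow> bool" where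
  "is_lin L L' h \<longleftrightarrow> (\<forall>x\<in>lcarrier L. h x \<in> lcarrier L') \<and>
     (\<forall>x\<in>lcarrier L. \<forall>y\<in>lcarrier L. h (ladd L x y) = ladd L' (h x) (h y)) \<and>
     (\<forall>c. \<forall>x\<in>lcarrier L. h (lsmult L c x) = lsmult L' c (h x))"

definition is_hom :: "('k::field, 'a) alg \<Rightarrow> ('k, 'b) alg \<Rightarrow> ('a \<Rightarrow> 'b) \<Rightarrow> bool" where
  "is_hom L L' h \<longleftrightarrow> is_lin L L' h \<and>
     (\<forall>x\<in>lcarrier L. \<forall>y\<in>lcarrier L. h (lbr L x y) = lbr L' (h x) (h y))"

lemma is_linD:
  assumes "is_lin L L' h"
  shows "x \<in> lcarrier L \<Longrightarrow> h x \<in> lcarrier L'"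
    "x \<in> lcarrier L \<Longrightarrow> y \<in> lcarrier L \<Longrightarrow> h (ladd L x y) = ladd L' (h x) (h y)"
    "x \<in> lcarrier L \<Longrightarrow> h (lsmult L c x) = lsmult L' c (h x)"
  using assms unfolding is_lin_def by auto

lemma is_homD:
  assumes "is_hom L L' h"
  shows "x \<in> lcarrier L \<Longrightarrow> h x \<in> lcarrier L'"
    "x \<in> lcarrier L \<Longrightarrow> y \<in> lcarrier L \<Longrightarrow> h (ladd L x y) = ladd L' (h x) (h y)"
    "x \<in> lcarrier L \<Longrightarrow> h (lsmult L c x) = lsmult L' c (h x)"
    "x \<in> lcarrier L \<Longrightarrow> y \<in> lcarrier L \<Longrightarrow> h (lbr L x y) = lbr L' (h x) (h y)"
    "is_lin L L' h"
  using assms unfolding is_hom_def is_lin_def by auto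

lemma hom_comp:
  assumes "is_hom L1 L2 h" "is_hom L2 L3 g"
  shows "is_hom L1 L3 (\<lambda>x. g (h x))"
  using assms unfolding is_hom_def is_lin_def by auto

lemma lin_zero:
  assumes "nalg L" "nalg L'" "is_lin L L' h"
  shows "h (lzero L) = lzero L'"
proof -
  interpret A: nalg L by fact
  interpret B: nalg L' by fact
  have "h (lzero L) = h (lsmult L 0 (lzero L))" by simp
  also have "\<dots> = lsmult L' 0 (h (lzero L))" using is_linD(3)[OF assms(3) A.zero_cl] by blast
  also have "\<dots> = lzero L'" using is_linD(1)[OF assms(3)] by simp
  finally show ?thesis .
qed

lemma lin_sub:
  assumes "nalg L" "nalg L'" "is_lin L L' h" "x \<in> lcarrier L" "y \<in> lcarrier L"
  shows "h (lsub L x y) = lsub L' (h x) (h y)"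
  using assms is_linD[OF assms(3)] unfolding lsub_def by (simp add: nalg.sm_cl)

lemma lin_preimage_subspace:
  assumes "nalg L" "nalg L'" "is_lin L L' h" "subspace_of L' V"
  shows "subspace_of L {x \<in> lcarrier L. h x \<in> V}"
  using assms lin_zero[OF assms(1-3)] is_linD[OF assms(3)]
  unfolding subspace_of_def by (auto simp: nalg.add_cl nalg.sm_cl nalg.zero_cl)

lemma lin_image_subspace:
  assumes "nalg L" "nalg L'" "is_lin L L' h" "subspace_of L V"
  shows "subspace_of L' (h ` V)"
proof -
  have V: "V \<subseteq> lcarrier L" using assms(4) unfolding subspace_of_def by auto
  show ?thesis
    unfolding subspace_of_def
  proof (intro conjI ballI allI)
    show "h ` V \<subseteq> lcarrier L'" using V is_linD(1)[OF assms(3)] by auto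
    show "lzero L' \<in> h ` V" using lin_zero[OF assms(1-3), symmetric] assms(4)
      unfolding subspace_of_def by auto
    fix x y assume "x \<in> h ` V" "y \<in> h ` V"
    then obtain a b where "a \<in> V" "b \<in> V" "x = h a" "y = h b" by auto
    then show "ladd L' x y \<in> h ` V" using V is_linD(2)[OF assms(3), of a b] assms(4)
      unfolding subspace_of_def by (metis image_eqI subsetD)
  next
    fix c x assume "x \<in> h ` V"
    then obtain a where "a \<in> V" "x = h a" by auto
    then show "lsmult L' c x \<in> h ` V" using V is_linD(3)[OF assms(3), of a c] assms(4)
      unfolding subspace_of_def by (metis image_eqI subsetD)
  qed
qed

lemma hom_lcs:
  assumes "nalg L" "nalg L'" "is_hom L L' h"
  shows "h ` lcs L k \<subseteq> lcs L' k"
proof (induction k)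
  case 0 then show ?case using is_homD(1)[OF assms(3)] by auto
next
  case (Suc k)
  interpret A: nalg L by fact
  interpret B: nalg L' by fact
  show ?case
  proof (cases k)
    case 0 then show ?thesis using is_homD(1)[OF assms(3)] by auto
  next
    case (Suc j)
    let ?V = "{x \<in> lcarrier L. h x \<in> lcs L' (Suc (Suc j))}"
    have sV: "subspace_of L ?V"
      by (rule lin_preimage_subspace[OF assms(1,2) is_homD(5)[OF assms(3)] B.lcs_subspace])
    have "lcs L (Suc (Suc j)) \<subseteq> ?V"
    proof (rule A.lcs_SS_least[OF sV])
      fix x y assume x: "x \<in> lcarrier L" and y: "y \<in> lcs L (Suc j)"
      have yC: "y \<in> lcarrier L" using y A.lcs_carrier by auto
      have "h y \<in> lcs L' (Suc j)" using Suc.IH Suc y by auto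
      then have "lbr L' (h x) (h y) \<in> lcs L' (Suc (Suc j))"
        using B.lcs_br is_homD(1)[OF assms(3) x] by blast
      then show "lbr L x y \<in> ?V" using is_homD(4)[OF assms(3) x yC] x yC by simp
    qed
    then show ?thesis using Suc by auto
  qed
qed

lemma lcs_surj:
  assumes "nalg L" "nalg L'" "is_hom L L' h" "h ` lcarrier L = lcarrier L'"
  shows "lcs L' k \<subseteq> h ` lcs L k"
proof (induction k)
  case 0 then show ?case using assms(4) by simp
next
  case (Suc k)
  interpret A: nalg L by fact
  interpret B: nalg L' by fact
  show ?case
  proof (cases k)
    case 0 then show ?thesis using assms(4) by simp
  next
    case (Suc j)
    have sV: "subspace_of L' (h ` lcs L (Suc (Suc j)))"
      by (rule lin_image_subspace[OF assms(1,2) is_homD(5)[OF assms(3)] A.lcs_subspace])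
    have "lcs L' (Suc (Suc j)) \<subseteq> h ` lcs L (Suc (Suc j))"
    proof (rule B.lcs_SS_least[OF sV])
      fix x y assume x: "x \<in> lcarrier L'" and y: "y \<in> lcs L' (Suc j)"
      obtain a where a: "a \<in> lcarrier L" "x = h a" using x assms(4) by auto
      obtain b where b: "b \<in> lcs L (Suc j)" "y = h b" using y Suc.IH Suc by auto
      have bC: "b \<in> lcarrier L" using b A.lcs_carrier by auto
      have "lbr L a b \<in> lcs L (Suc (Suc j))" using A.lcs_br a b by blast
      then show "lbr L' x y \<in> h ` lcs L (Suc (Suc j))"
        using is_homD(4)[OF assms(3) a(1) bC] a b by (metis image_eqI)
    qed
    then show ?thesis using Suc by auto
  qed
qed

locale nquot = nalg L for L :: "('k::field, 'a) alg" +
  fixes I :: "'a set"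
  assumes ideal: "two_sided_ideal L I"
begin

abbreviation "Q \<equiv> lie_quot L I"
abbreviation "pj \<equiv> lcoset L I"

lemma I_subspace: "subspace_of L I" using ideal unfolding two_sided_ideal_def by auto
lemma I_C: "I \<subseteq> C" using subspaceD(1)[OF I_subspace] .
lemma I_zero[simp]: "zr \<in> I" using subspaceD(2)[OF I_subspace] .
lemma I_add: "x \<in> I \<Longrightarrow> y \<in> I \<Longrightarrow> pl x y \<in> I" using subspaceD(3)[OF I_subspace] .
lemma I_sm: "x \<in> I \<Longrightarrow> sm c x \<in> I" using subspaceD(4)[OF I_subspace] .
lemma I_brl: "x \<in> C \<Longrightarrow> y \<in> I \<Longrightarrow> br x y \<in> I" using ideal unfolding two_sided_ideal_def by auto
lemma I_brr: "x \<in> C \<Longrightarrow> y \<in> I \<Longrightarrow> br y x \<in> I" using ideal unfolding two_sided_ideal_def by auto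
lemma I_sub: "x \<in> I \<Longrightarrow> y \<in> I \<Longrightarrow> lsub L x y \<in> I" using subspace_sub[OF I_subspace] .

lemma Q_carrier[simp]: "lcarrier Q = pj ` C" by (simp add: lie_quot_def)
lemma Q_zero: "lzero Q = pj zr" by (simp add: lie_quot_def)

lemma pj_mem: "x \<in> C \<Longrightarrow> x \<in> pj x"
  unfolding lcoset_def by (rule image_eqI[of _ _ zr]) simp_all

lemma pj_eq_iff: "x \<in> C \<Longrightarrow> y \<in> C \<Longrightarrow> (pj x = pj y) = (lsub L x y \<in> I)"
proof
  assume x: "x \<in> C" and y: "y \<in> C" and e: "pj x = pj y"
  have "y \<in> pj x" using pj_mem[OF y] e by simp
  then obtain i where i: "i \<in> I" "y = pl x i" unfolding lcoset_def by auto
  have iC: "i \<in> C" using i I_C by auto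
  have "lsub L x y = ng i" using i x iC by (simp add: lsub_def sm_add)
  then show "lsub L x y \<in> I" using I_sm i by simp
next
  assume x: "x \<in> C" and y: "y \<in> C" and j: "lsub L x y \<in> I"
  obtain jj where jj: "jj = lsub L x y" by simp
  have jC: "jj \<in> C" using x y jj by simp
  have xe: "x = pl y jj" using sub_decomp[OF x y] jj by simp
  have jI: "jj \<in> I" using j jj by simp
  show "pj x = pj y"
  proof
    show "pj x \<subseteq> pj y"
    proof
      fix z assume "z \<in> pj x"
      then obtain i where i: "i \<in> I" "z = pl x i" unfolding lcoset_def by auto
      have iC: "i \<in> C" using i I_C by auto
      have "z = pl y (pl jj i)" unfolding i(2) xe using add_assoc[OF y jC iC] .
      then show "z \<in> pj y" unfolding lcoset_def using I_add[OF jI i(1)] by auto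
    qed
  next
    show "pj y \<subseteq> pj x"
    proof
      fix z assume "z \<in> pj y"
      then obtain i where i: "i \<in> I" "z = pl y i" unfolding lcoset_def by auto
      have iC: "i \<in> C" using i I_C by auto
      have "pl x (pl (ng jj) i) = pl y (pl jj (pl (ng jj) i))"
        unfolding xe using add_assoc[OF y jC] iC jC by simp
      also have "\<dots> = pl y i" using jC iC by simp
      finally have "z = pl x (pl (ng jj) i)" using i by simp
      then show "z \<in> pj x" unfolding lcoset_def using I_add[OF I_sm[OF jI] i(1)] by auto
    qed
  qed
qed

lemma pj_zero_iff: "x \<in> C \<Longrightarrow> (pj x = pj zr) = (x \<in> I)"
  using pj_eq_iff[of x zr] unfolding lsub_def by simp

lemma rep_in: "x \<in> C \<Longrightarrow> lrep (pj x) \<in> pj x"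
  unfolding lrep_def using pj_mem by (rule someI)

lemma rep_C: "x \<in> C \<Longrightarrow> lrep (pj x) \<in> C"
  using rep_in[of x] I_C unfolding lcoset_def by auto

lemma rep_sub: "x \<in> C \<Longrightarrow> lsub L (lrep (pj x)) x \<in> I"
proof -
  assume x: "x \<in> C"
  obtain i where i: "i \<in> I" "lrep (pj x) = pl x i" using rep_in[OF x] unfolding lcoset_def by auto
  have iC: "i \<in> C" using i I_C by auto
  have "lsub L (pl x i) x = pl (ng x) (pl x i)" unfolding lsub_def using x iC add_comm by simp
  also have "\<dots> = i" using x iC by simp
  finally show ?thesis using i by simp
qed

lemma pj_rep: "x \<in> C \<Longrightarrow> pj (lrep (pj x)) = pj x"
  using pj_eq_iff[OF rep_C] rep_sub by auto

lemma rep_carrier: "A \<in> lcarrier Q \<Longrightarrow> lrep A \<in> C"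
  using rep_C by auto

lemma pj_rep': "A \<in> lcarrier Q \<Longrightarrow> pj (lrep A) = A"
  using pj_rep by auto

lemma Q_add[simp]: "x \<in> C \<Longrightarrow> y \<in> C \<Longrightarrow> ladd Q (pj x) (pj y) = pj (pl x y)"
proof -
  assume x: "x \<in> C" and y: "y \<in> C"
  have "ladd Q (pj x) (pj y) = pj (pl (lrep (pj x)) (lrep (pj y)))" by (simp add: lie_quot_def)
  also have "\<dots> = pj (pl x y)"
    using pj_eq_iff sub_pl_pl rep_C rep_sub I_add x y by simp
  finally show ?thesis .
qed

lemma Q_sm[simp]: "x \<in> C \<Longrightarrow> lsmult Q c (pj x) = pj (sm c x)"
proof -
  assume x: "x \<in> C"
  have "lsmult Q c (pj x) = pj (sm c (lrep (pj x)))" by (simp add: lie_quot_def)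
  also have "\<dots> = pj (sm c x)"
    using pj_eq_iff sub_sm rep_C rep_sub I_sm x by simp
  finally show ?thesis .
qed

lemma Q_br[simp]: "x \<in> C \<Longrightarrow> y \<in> C \<Longrightarrow> lbr Q (pj x) (pj y) = pj (br x y)"
proof -
  assume x: "x \<in> C" and y: "y \<in> C"
  have "lbr Q (pj x) (pj y) = pj (br (lrep (pj x)) (lrep (pj y)))" by (simp add: lie_quot_def)
  also have "\<dots> = pj (br x y)"
    using pj_eq_iff sub_br rep_C rep_sub I_add I_brl I_brr x y by simp
  finally show ?thesis .
qed

lemma pj_C[simp]: "x \<in> C \<Longrightarrow> pj x \<in> lcarrier Q" by simp

lemma nalg_Q: "nalg Q"
proof unfold_locales
qed (auto simp: Q_zero add_ac sm_add add_sm br_add_l br_add_r br_sm_l br_sm_r)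

lemma pj_hom: "is_hom L Q pj"
  unfolding is_hom_def is_lin_def by auto

lemma pj_surj: "pj ` C = lcarrier Q" by simp

lemma pj_zero_iff': "x \<in> C \<Longrightarrow> (pj x = lzero Q) = (x \<in> I)"
  using pj_zero_iff Q_zero by simp

lemma lie_Q: "lie L \<Longrightarrow> lie Q"
proof -
  assume "lie L"
  then interpret lie L .
  interpret q: nalg Q by (rule nalg_Q)
  show ?thesis
  proof unfold_locales
    fix x assume "x \<in> lcarrier Q"
    then show "lbr Q x x = lzero Q" by (auto simp: Q_zero)
  next
    fix x y z assume "x \<in> lcarrier Q" "y \<in> lcarrier Q" "z \<in> lcarrier Q"
    then show "ladd Q (ladd Q (lbr Q x (lbr Q y z)) (lbr Q y (lbr Q z x))) (lbr Q z (lbr Q x y)) = lzero Q"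
      using jacobi by (auto simp: Q_zero)
  qed
qed

lemma factor:
  assumes L': "nalg L'" and h: "is_hom L L' h" and hI: "\<And>x. x \<in> I \<Longrightarrow> h x = lzero L'"
  shows "is_hom Q L' (\<lambda>A. h (lrep A))" and "\<And>x. x \<in> C \<Longrightarrow> h (lrep (pj x)) = h x"
proof -
  interpret B: nalg L' by fact
  show hx: "\<And>x. x \<in> C \<Longrightarrow> h (lrep (pj x)) = h x"
  proof -
    fix x assume x: "x \<in> C"
    have "h (lsub L (lrep (pj x)) x) = lzero L'" using hI rep_sub x by simp
    then have "lsub L' (h (lrep (pj x))) (h x) = lzero L'"
      using lin_sub[OF nalg_axioms L' is_homD(5)[OF h] rep_C[OF x] x] by simp
    then show "h (lrep (pj x)) = h x"
      using B.sub_eq_zero_iff is_homD(1)[OF h] rep_C x by auto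
  qed
  show "is_hom Q L' (\<lambda>A. h (lrep A))"
    unfolding is_hom_def is_lin_def
    using hx is_homD[OF h] by auto
qed

end


definition supp :: "(tree \<Rightarrow> 'k::zero) \<Rightarrow> tree set" where
  "supp f = {s. f s \<noteq> 0}"

definition dl :: "tree \<Rightarrow> tree \<Rightarrow> 'k::{zero,one}" where
  "dl s = (\<lambda>r. if r = s then 1 else 0)"

lemma M_carrier: "f \<in> lcarrier (free_magma_alg d :: ('k::field, tree \<Rightarrow> 'k) alg) \<longleftrightarrow>
   finite (supp f) \<and> (\<forall>s. f s \<noteq> 0 \<longrightarrow> leaves s \<subseteq> {..<d})"
  by (simp add: free_magma_alg_def supp_def)

lemma M_simps:
  "lzero (free_magma_alg d :: ('k::field, tree \<Rightarrow> 'k) alg) = (\<lambda>_. 0)"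
  "ladd (free_magma_alg d :: ('k::field, tree \<Rightarrow> 'k) alg) = (\<lambda>f g s. f s + g s)"
  "lsmult (free_magma_alg d :: ('k::field, tree \<Rightarrow> 'k) alg) = (\<lambda>c f s. c * f s)"
  "lbr (free_magma_alg d :: ('k::field, tree \<Rightarrow> 'k) alg) =
     (\<lambda>f g s. case s of Leaf _ \<Rightarrow> 0 | Node a b \<Rightarrow> f a * g b)"
  by (simp_all add: free_magma_alg_def)

lemma supp_add: "supp (\<lambda>s. f s + g s) \<subseteq> supp f \<union> supp (g :: tree \<Rightarrow> 'k::field)"
  unfolding supp_def by auto

lemma supp_sm: "supp (\<lambda>s. c * f s) \<subseteq> supp (f :: tree \<Rightarrow> 'k::field)"
  unfolding supp_def by auto

lemma supp_br: "supp (\<lambda>s. case s of Leaf _ \<Rightarrow> 0 | Node a b \<Rightarrow> f a * (g b :: 'k::field)) \<subseteq>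
   (\<lambda>(a, b). Node a b) ` (supp f \<times> supp g)"
proof
  fix s assume "s \<in> supp (\<lambda>s. case s of Leaf _ \<Rightarrow> 0 | Node a b \<Rightarrow> f a * g b)"
  then show "s \<in> (\<lambda>(a, b). Node a b) ` (supp f \<times> supp g)"
    unfolding supp_def by (cases s) (auto intro!: image_eqI[of _ _ "(a,b)" for a b])
qed

lemma nalg_M: "nalg (free_magma_alg d :: ('k::field, tree \<Rightarrow> 'k) alg)"
proof unfold_locales
  fix x y :: "tree \<Rightarrow> 'k"
  let ?M = "free_magma_alg d :: ('k::field, tree \<Rightarrow> 'k) alg"
  assume x: "x \<in> lcarrier ?M" and y: "y \<in> lcarrier ?M"
  show "ladd ?M x y \<in> lcarrier ?M"
  proof -
    have "finite (supp (ladd ?M x y))"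
      using x y supp_add[of x y] unfolding M_carrier M_simps by (auto intro: finite_subset)
    moreover have "\<forall>s. ladd ?M x y s \<noteq> 0 \<longrightarrow> leaves s \<subseteq> {..<d}"
    proof (intro allI impI)
      fix s assume "ladd ?M x y s \<noteq> 0"
      then have "x s \<noteq> 0 \<or> y s \<noteq> 0" unfolding M_simps by auto
      then show "leaves s \<subseteq> {..<d}" using x y unfolding M_carrier by blast
    qed
    ultimately show ?thesis unfolding M_carrier by simp
  qed
  show "lbr ?M x y \<in> lcarrier ?M"
  proof -
    have "finite (supp (lbr ?M x y))"
      using x y supp_br[of x y] unfolding M_carrier M_simps by (auto intro: finite_subset)
    moreover have "\<forall>s. lbr ?M x y s \<noteq> 0 \<longrightarrow> leaves s \<subseteq> {..<d}"
    proof (intro allI impI)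
      fix s assume "lbr ?M x y s \<noteq> 0"
      then show "leaves s \<subseteq> {..<d}" using x y unfolding M_carrier M_simps
        by (cases s) auto
    qed
    ultimately show ?thesis unfolding M_carrier by simp
  qed
next
  fix x :: "tree \<Rightarrow> 'k" and c
  let ?M = "free_magma_alg d :: ('k::field, tree \<Rightarrow> 'k) alg"
  assume x: "x \<in> lcarrier ?M"
  show "lsmult ?M c x \<in> lcarrier ?M"
    using x supp_sm[of c x] unfolding M_carrier M_simps by (auto intro: finite_subset)
next
  show "lzero (free_magma_alg d) \<in> lcarrier (free_magma_alg d :: ('k::field, tree \<Rightarrow> 'k) alg)"
    unfolding M_carrier M_simps supp_def by simp
qed (simp_all add: M_simps fun_eq_iff algebra_simps split: tree.split)

lemma dl_carrier: "leaves s \<subseteq> {..<d} \<Longrightarrow> dl s \<in> lcarrier (free_magma_alg d :: ('k::field, tree \<Rightarrow> 'k) alg)"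
  unfolding M_carrier dl_def supp_def by auto

lemma dl_br: "lbr (free_magma_alg d :: ('k::field, tree \<Rightarrow> 'k) alg) (dl a) (dl b) = dl (Node a b)"
  unfolding M_simps dl_def by (auto split: tree.split)

lemma M_span_all:
  fixes W :: "(tree \<Rightarrow> 'k::field) set"
  assumes W: "subspace_of (free_magma_alg d) W"
    and dl: "\<And>s. leaves s \<subseteq> {..<d} \<Longrightarrow> dl s \<in> W"
  shows "lcarrier (free_magma_alg d) \<subseteq> W"
proof -
  let ?M = "free_magma_alg d :: ('k::field, tree \<Rightarrow> 'k) alg"
  interpret nalg ?M by (rule nalg_M)
  have main: "finite A \<Longrightarrow> (\<forall>f. f \<in> C \<longrightarrow> supp f \<subseteq> A \<longrightarrow> f \<in> W)" for A
  proof (induction A rule: finite_induct)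
    case empty
    show ?case
    proof (intro allI impI)
      fix f :: "tree \<Rightarrow> 'k" assume "f \<in> C" "supp f \<subseteq> {}"
      then have "f = (\<lambda>_. 0)" unfolding supp_def by auto
      then show "f \<in> W" using subspaceD(2)[OF W] unfolding M_simps by simp
    qed
  next
    case (insert a A)
    show ?case
    proof (intro allI impI)
      fix f :: "tree \<Rightarrow> 'k" assume f: "f \<in> C" "supp f \<subseteq> insert a A"
      let ?g = "f(a := 0)"
      have gC: "?g \<in> C" using f(1) unfolding M_carrier supp_def
        by (auto intro: finite_subset)
      have "supp ?g \<subseteq> A" using f(2) insert.hyps(2) unfolding supp_def by auto
      then have gW: "?g \<in> W" using insert.IH gC by blast
      show "f \<in> W"
      proof (cases "f a = 0")
        case True
        then have "f = ?g" by auto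
        then show ?thesis using gW by simp
      next
        case False
        then have "leaves a \<subseteq> {..<d}" using f(1) unfolding M_carrier by auto
        then have "sm (f a) (dl a) \<in> W" using dl subspaceD(4)[OF W] by blast
        then have "pl ?g (sm (f a) (dl a)) \<in> W" using gW subspaceD(3)[OF W] by blast
        moreover have "pl ?g (sm (f a) (dl a)) = f" unfolding M_simps dl_def by auto
        ultimately show ?thesis by simp
      qed
    qed
  qed
  show ?thesis using main M_carrier by blast
qed

lemma M_gen_all:
  fixes W :: "(tree \<Rightarrow> 'k::field) set"
  assumes W: "subspace_of (free_magma_alg d) W"
    and brW: "\<And>x y. x \<in> W \<Longrightarrow> y \<in> W \<Longrightarrow> lbr (free_magma_alg d) x y \<in> W"
    and gen: "\<And>i. i < d \<Longrightarrow> dl (Leaf i) \<in> W"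
  shows "lcarrier (free_magma_alg d) \<subseteq> W"
proof (rule M_span_all[OF W])
  fix s show "leaves s \<subseteq> {..<d} \<Longrightarrow> dl s \<in> W"
  proof (induction s)
    case (Leaf i) then show ?case using gen by simp
  next
    case (Node a b)
    then have "lbr (free_magma_alg d) (dl a) (dl b) \<in> W" using brW by simp
    then show ?case unfolding dl_br .
  qed
qed

primrec evt :: "(nat \<Rightarrow> tree \<Rightarrow> 'k::field) \<Rightarrow> tree \<Rightarrow> tree \<Rightarrow> 'k" where
  "evt z (Leaf i) = z i"
| "evt z (Node a b) = (\<lambda>r. case r of Leaf _ \<Rightarrow> 0 | Node p q \<Rightarrow> evt z a p * evt z b q)"

definition Ev :: "(nat \<Rightarrow> tree \<Rightarrow> 'k::field) \<Rightarrow> (tree \<Rightarrow> 'k) \<Rightarrow> tree \<Rightarrow> 'k" where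
  "Ev z f = (\<lambda>r. \<Sum>s\<in>supp f. f s * evt z s r)"

lemma Ev_gen:
  assumes "finite A" "supp f \<subseteq> A"
  shows "Ev z f r = (\<Sum>s\<in>A. f s * evt z s r)"
  unfolding Ev_def using assms
  by (intro sum.mono_neutral_left) (auto simp: supp_def)

lemma evt_carrier:
  assumes z: "\<And>i. i < d \<Longrightarrow> z i \<in> lcarrier (free_magma_alg d :: ('k::field, tree \<Rightarrow> 'k) alg)"
  shows "leaves s \<subseteq> {..<d} \<Longrightarrow> evt z s \<in> lcarrier (free_magma_alg d :: ('k::field, tree \<Rightarrow> 'k) alg)"
proof (induction s)
  case (Leaf i) then show ?case using z by simp
next
  case (Node a b)
  interpret nalg "free_magma_alg d :: ('k::field, tree \<Rightarrow> 'k) alg" by (rule nalg_M)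
  have "lbr (free_magma_alg d) (evt z a) (evt z b) \<in> lcarrier (free_magma_alg d :: ('k::field, tree \<Rightarrow> 'k) alg)"
    using Node by simp
  then show ?case unfolding M_simps by simp
qed

lemma Ev_carrier:
  assumes z: "\<And>i. i < d \<Longrightarrow> z i \<in> lcarrier (free_magma_alg d :: ('k::field, tree \<Rightarrow> 'k) alg)"
    and f: "f \<in> lcarrier (free_magma_alg d :: ('k::field, tree \<Rightarrow> 'k) alg)"
  shows "Ev z f \<in> lcarrier (free_magma_alg d :: ('k::field, tree \<Rightarrow> 'k) alg)"
proof -
  have fin: "finite (supp f)" and lv: "\<And>s. s \<in> supp f \<Longrightarrow> leaves s \<subseteq> {..<d}"
    using f unfolding M_carrier supp_def by auto
  have ev: "\<And>s. s \<in> supp f \<Longrightarrow> evt z s \<in> lcarrier (free_magma_alg d :: ('k::field, tree \<Rightarrow> 'k) alg)"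
    using evt_carrier[where z=z, OF z] lv by blast
  have sub: "supp (Ev z f) \<subseteq> (\<Union>s\<in>supp f. supp (evt z s))"
  proof
    fix r assume "r \<in> supp (Ev z f)"
    then have "(\<Sum>s\<in>supp f. f s * evt z s r) \<noteq> 0" unfolding supp_def Ev_def by simp
    then obtain s where "s \<in> supp f" "evt z s r \<noteq> 0" by (metis (no_types, lifting) mult_zero_right sum.neutral)
    then show "r \<in> (\<Union>s\<in>supp f. supp (evt z s))" unfolding supp_def by auto
  qed
  have "finite (\<Union>s\<in>supp f. supp (evt z s))" using fin ev unfolding M_carrier by auto
  then have "finite (supp (Ev z f))" using sub finite_subset by blast
  moreover have "\<forall>r. Ev z f r \<noteq> 0 \<longrightarrow> leaves r \<subseteq> {..<d}"
  proof (intro allI impI)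
    fix r assume "Ev z f r \<noteq> 0"
    then have "r \<in> (\<Union>s\<in>supp f. supp (evt z s))" using sub unfolding supp_def by auto
    then obtain s where "s \<in> supp f" "evt z s r \<noteq> 0" unfolding supp_def by auto
    then show "leaves r \<subseteq> {..<d}" using ev unfolding M_carrier by auto
  qed
  ultimately show ?thesis unfolding M_carrier by simp
qed

lemma Ev_hom:
  assumes z: "\<And>i. i < d \<Longrightarrow> z i \<in> lcarrier (free_magma_alg d :: ('k::field, tree \<Rightarrow> 'k) alg)"
  shows "is_hom (free_magma_alg d :: ('k::field, tree \<Rightarrow> 'k) alg) (free_magma_alg d) (Ev z)"
  unfolding is_hom_def is_lin_def
proof (intro conjI ballI allI)
  let ?M = "free_magma_alg d :: ('k::field, tree \<Rightarrow> 'k) alg"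
  fix f assume f: "f \<in> lcarrier ?M"
  show "Ev z f \<in> lcarrier ?M" by (rule Ev_carrier[OF z f])
  fix c show "Ev z (lsmult ?M c f) = lsmult ?M c (Ev z f)"
  proof
    fix r
    have ff: "finite (supp f)" using f unfolding M_carrier by simp
    have "Ev z (lsmult ?M c f) r = (\<Sum>s\<in>supp f. (c * f s) * evt z s r)"
      unfolding M_simps using ff supp_sm[of c f] by (rule Ev_gen)
    also have "\<dots> = c * Ev z f r" unfolding Ev_def by (simp add: sum_distrib_left mult.assoc)
    finally show "Ev z (lsmult ?M c f) r = lsmult ?M c (Ev z f) r" unfolding M_simps by simp
  qed
next
  let ?M = "free_magma_alg d :: ('k::field, tree \<Rightarrow> 'k) alg"
  fix f g assume f: "f \<in> lcarrier ?M" and g: "g \<in> lcarrier ?M"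
  have ff: "finite (supp f)" and fg: "finite (supp g)" using f g unfolding M_carrier by auto
  show "Ev z (ladd ?M f g) = ladd ?M (Ev z f) (Ev z g)"
  proof
    fix r
    let ?A = "supp f \<union> supp g"
    have "Ev z (ladd ?M f g) r = (\<Sum>s\<in>?A. (f s + g s) * evt z s r)"
      unfolding M_simps using ff fg supp_add[of f g] by (intro Ev_gen) auto
    also have "\<dots> = (\<Sum>s\<in>?A. f s * evt z s r) + (\<Sum>s\<in>?A. g s * evt z s r)"
      by (simp add: distrib_right sum.distrib)
    also have "\<dots> = Ev z f r + Ev z g r"
      using ff fg Ev_gen[of ?A f z r] Ev_gen[of ?A g z r] by simp
    finally show "Ev z (ladd ?M f g) r = ladd ?M (Ev z f) (Ev z g) r" unfolding M_simps by simp
  qed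
  show "Ev z (lbr ?M f g) = lbr ?M (Ev z f) (Ev z g)"
  proof
    fix r
    let ?A = "(\<lambda>(a, b). Node a b) ` (supp f \<times> supp g)"
    have finA: "finite ?A" using ff fg by simp
    have inj: "inj_on (\<lambda>(a, b). Node a b) (supp f \<times> supp g)" by (auto simp: inj_on_def)
    have "Ev z (lbr ?M f g) r = (\<Sum>s\<in>?A. lbr ?M f g s * evt z s r)"
      using finA supp_br[of f g] unfolding M_simps by (intro Ev_gen) auto
    also have "\<dots> = (\<Sum>(a, b)\<in>supp f \<times> supp g. f a * g b * evt z (Node a b) r)"
      by (subst sum.reindex[OF inj]) (simp add: M_simps case_prod_unfold)
    also have "\<dots> = lbr ?M (Ev z f) (Ev z g) r"
    proof (cases r)
      case (Leaf i)
      then show ?thesis by (simp add: M_simps case_prod_unfold)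
    next
      case (Node p q)
      have "(\<Sum>(a, b)\<in>supp f \<times> supp g. f a * g b * evt z (Node a b) r) =
            (\<Sum>a\<in>supp f. \<Sum>b\<in>supp g. (f a * evt z a p) * (g b * evt z b q))"
        unfolding Node by (simp add: sum.cartesian_product[symmetric] algebra_simps)
      also have "\<dots> = Ev z f p * Ev z g q"
        unfolding Ev_def by (simp add: sum_product)
      finally show ?thesis unfolding Node M_simps by simp
    qed
    finally show "Ev z (lbr ?M f g) r = lbr ?M (Ev z f) (Ev z g) r" .
  qed
qed

lemma Ev_dl: "Ev z (dl (Leaf i)) = z i"
proof -
  have "supp (dl (Leaf i) :: tree \<Rightarrow> 'a) = {Leaf i}" unfolding supp_def dl_def by auto
  then show ?thesis unfolding Ev_def by (auto simp: dl_def)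
qed


lemma gen_ideal:
  assumes "nalg L" "S \<subseteq> lcarrier L"
  shows "two_sided_ideal L (gen_two_sided_ideal L S)" "S \<subseteq> gen_two_sided_ideal L S"
    "\<And>I. two_sided_ideal L I \<Longrightarrow> S \<subseteq> I \<Longrightarrow> gen_two_sided_ideal L S \<subseteq> I"
proof -
  interpret nalg L by fact
  have CI: "two_sided_ideal L C" unfolding two_sided_ideal_def using carrier_subspace by auto
  let ?F = "{I. two_sided_ideal L I \<and> S \<subseteq> I}"
  have F: "C \<in> ?F" using CI assms(2) by simp
  show "S \<subseteq> gen_two_sided_ideal L S" unfolding gen_two_sided_ideal_def by blast
  show "\<And>I. two_sided_ideal L I \<Longrightarrow> S \<subseteq> I \<Longrightarrow> gen_two_sided_ideal L S \<subseteq> I"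
    unfolding gen_two_sided_ideal_def by blast
  have sub: "gen_two_sided_ideal L S \<subseteq> C" unfolding gen_two_sided_ideal_def using F by blast
  have mem: "x \<in> gen_two_sided_ideal L S \<longleftrightarrow> (\<forall>I\<in>?F. x \<in> I)" for x
    unfolding gen_two_sided_ideal_def by blast
  have ssI: "\<And>I. I \<in> ?F \<Longrightarrow> subspace_of L I" unfolding two_sided_ideal_def by auto
  show "two_sided_ideal L (gen_two_sided_ideal L S)"
    unfolding two_sided_ideal_def subspace_of_def
  proof (intro conjI ballI allI)
    show "gen_two_sided_ideal L S \<subseteq> C" by (rule sub)
    show "zr \<in> gen_two_sided_ideal L S" unfolding mem using ssI subspaceD(2) by blast
    fix x y assume x: "x \<in> gen_two_sided_ideal L S" and y: "y \<in> gen_two_sided_ideal L S"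
    show "pl x y \<in> gen_two_sided_ideal L S" unfolding mem
    proof
      fix I assume I: "I \<in> ?F"
      then show "pl x y \<in> I" using x y mem ssI[OF I] subspaceD(3) by blast
    qed
  next
    fix c x assume x: "x \<in> gen_two_sided_ideal L S"
    show "sm c x \<in> gen_two_sided_ideal L S" unfolding mem
    proof
      fix I assume I: "I \<in> ?F"
      then show "sm c x \<in> I" using x mem ssI[OF I] subspaceD(4) by blast
    qed
  next
    fix x y assume x: "x \<in> C" and y: "y \<in> gen_two_sided_ideal L S"
    show "br x y \<in> gen_two_sided_ideal L S" unfolding mem
    proof
      fix I assume I: "I \<in> ?F"
      then show "br x y \<in> I" using x y mem unfolding two_sided_ideal_def by blast
    qed
    show "br y x \<in> gen_two_sided_ideal L S" unfolding mem
    proof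
      fix I assume I: "I \<in> ?F"
      then show "br y x \<in> I" using x y mem unfolding two_sided_ideal_def by blast
    qed
  qed
qed

lemma relations_carrier: "nalg L \<Longrightarrow> lie_relations L \<subseteq> lcarrier L"
  unfolding lie_relations_def by (auto simp: nalg.add_cl nalg.br_cl)

lemma kernel_ideal:
  assumes "nalg L" "nalg L'" "is_hom L L' h"
  shows "two_sided_ideal L {x \<in> lcarrier L. h x = lzero L'}"
proof -
  interpret A: nalg L by fact
  interpret B: nalg L' by fact
  have s: "subspace_of L {x \<in> lcarrier L. h x \<in> {lzero L'}}"
    by (rule lin_preimage_subspace[OF assms(1,2) is_homD(5)[OF assms(3)] B.zero_subspace])
  show ?thesis unfolding two_sided_ideal_def
    using s is_homD[OF assms(3)] by auto
qed

primrec lc :: "tree \<Rightarrow> nat" where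
  "lc (Leaf i) = 1"
| "lc (Node a b) = lc a + lc b"

lemma lc_pos: "lc s \<ge> 1" by (induction s) auto

lemma finite_trees: "finite {s. leaves s \<subseteq> {..<d} \<and> lc s \<le> N}"
proof (induction N rule: less_induct)
  case (less N)
  let ?S = "\<lambda>N. {s. leaves s \<subseteq> {..<d} \<and> lc s \<le> N}"
  show ?case
  proof (cases N)
    case 0
    have "\<And>s. \<not> lc s \<le> 0" using lc_pos by (metis le_zero_eq not_one_le_zero)
    then have e: "?S N = {}" using 0 by blast
    show ?thesis unfolding e by (rule finite.emptyI)
  next
    case (Suc m)
    have "?S N \<subseteq> Leaf ` {..<d} \<union> (\<lambda>(a, b). Node a b) ` (?S m \<times> ?S m)"
    proof
      fix s assume s: "s \<in> ?S N"
      show "s \<in> Leaf ` {..<d} \<union> (\<lambda>(a, b). Node a b) ` (?S m \<times> ?S m)"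
      proof (cases s)
        case (Leaf i) then show ?thesis using s by auto
      next
        case (Node a b)
        have "lc a \<le> m" "lc b \<le> m" using s Node Suc lc_pos[of a] lc_pos[of b] by auto
        then show ?thesis using s Node by (auto intro!: image_eqI[of _ _ "(a, b)"])
      qed
    qed
    moreover have "finite (?S m)" using less Suc by simp
    moreover have "finite (Leaf ` {..<d} \<union> (\<lambda>(a, b). Node a b) ` (?S m \<times> ?S m))"
      using calculation(2) by simp
    ultimately show ?thesis using finite_subset by blast
  qed
qed

locale fnil =
  fixes d t :: nat and M :: "('k::field, tree \<Rightarrow> 'k) alg"
  assumes M_def: "M = free_magma_alg d"
begin

abbreviation "J \<equiv> gen_two_sided_ideal M (lie_relations M)"
abbreviation "FL \<equiv> lie_quot M J"
abbreviation "K \<equiv> lcs FL (Suc t)"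
abbreviation "N \<equiv> lie_quot FL K"

lemma nalg_M': "nalg M" unfolding M_def by (rule nalg_M)

lemma J_ideal: "two_sided_ideal M J"
  using gen_ideal(1)[OF nalg_M' relations_carrier[OF nalg_M']] .

lemma J_rel: "lie_relations M \<subseteq> J"
  using gen_ideal(2)[OF nalg_M' relations_carrier[OF nalg_M']] .

lemma J_least: "two_sided_ideal M I \<Longrightarrow> lie_relations M \<subseteq> I \<Longrightarrow> J \<subseteq> I"
  using gen_ideal(3)[OF nalg_M' relations_carrier[OF nalg_M']] by blast

end

sublocale fnil \<subseteq> m: nalg M by (rule nalg_M')
sublocale fnil \<subseteq> q1: nquot M J by unfold_locales (rule J_ideal)

context fnil begin

lemma lie_FL: "lie FL"
proof -
  interpret f: nalg FL by (rule q1.nalg_Q)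
  show ?thesis
  proof unfold_locales
    fix x assume "x \<in> lcarrier FL"
    then obtain a where a: "a \<in> lcarrier M" "x = q1.pj a" by auto
    have "m.br a a \<in> J" using J_rel a unfolding lie_relations_def by blast
    then show "lbr FL x x = lzero FL" using a q1.pj_zero_iff' by simp
  next
    fix x y z assume "x \<in> lcarrier FL" "y \<in> lcarrier FL" "z \<in> lcarrier FL"
    then obtain a b c where a: "a \<in> lcarrier M" "x = q1.pj a" "b \<in> lcarrier M" "y = q1.pj b"
      "c \<in> lcarrier M" "z = q1.pj c" by auto
    have "m.pl (m.pl (m.br a (m.br b c)) (m.br b (m.br c a))) (m.br c (m.br a b)) \<in> J"
      using J_rel a unfolding lie_relations_def by blast
    then show "ladd FL (ladd FL (lbr FL x (lbr FL y z)) (lbr FL y (lbr FL z x))) (lbr FL z (lbr FL x y)) = lzero FL"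
      using a q1.pj_zero_iff' by simp
  qed
qed

end

sublocale fnil \<subseteq> fl: lie FL by (rule lie_FL)
sublocale fnil \<subseteq> q2: nquot FL K by unfold_locales (rule fl.lcs_ideal)
sublocale fnil \<subseteq> nn: lie N by (rule q2.lie_Q[OF fl.lie_axioms])

context fnil begin

lemma dl_br_M: "m.br (dl a) (dl b) = dl (Node a b)"
  unfolding M_def by (rule dl_br)

lemma dl_carrier_M: "leaves s \<subseteq> {..<d} \<Longrightarrow> dl s \<in> lcarrier M"
  unfolding M_def by (rule dl_carrier)

lemma N_eq: "free_nilpotent d t = N"
  unfolding free_nilpotent_def free_lie_def M_def by simp

definition PP :: "(tree \<Rightarrow> 'k) \<Rightarrow> (tree \<Rightarrow> 'k) set set" where
  "PP f = q2.pj (q1.pj f)"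

lemma P_hom: "is_hom M N PP"
  unfolding PP_def by (rule hom_comp[OF q1.pj_hom q2.pj_hom])

lemma P_surj: "PP ` lcarrier M = lcarrier N"
  unfolding PP_def using q1.pj_surj q2.pj_surj by (metis image_image)

lemma N_nilpotent: "lcs N (Suc t) = {lzero N}"
proof
  show "lcs N (Suc t) \<subseteq> {lzero N}"
  proof
    fix x assume "x \<in> lcs N (Suc t)"
    then obtain a where a: "a \<in> K" "x = q2.pj a"
      using lcs_surj[OF fl.nalg_axioms nn.nalg_axioms q2.pj_hom q2.pj_surj] by blast
    have aC: "a \<in> lcarrier FL" using a q2.I_C by blast
    have "q2.pj a = lzero N" using q2.pj_zero_iff'[OF aC] a by blast
    then show "x \<in> {lzero N}" using a by simp
  qed
  show "{lzero N} \<subseteq> lcs N (Suc t)" using nn.subspaceD(2)[OF nn.lcs_subspace] by simp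
qed

definition XX :: "nat \<Rightarrow> (tree \<Rightarrow> 'k) set set" where
  "XX i = PP (dl (Leaf i))"

lemma universal:
  assumes z: "\<And>i. i < d \<Longrightarrow> z i \<in> lcarrier M"
  shows "\<exists>\<Phi>. is_hom N N \<Phi> \<and> (\<forall>f\<in>lcarrier M. \<Phi> (PP f) = PP (Ev z f))"
proof -
  have Evh: "is_hom M M (Ev z)" using Ev_hom[of d z] z unfolding M_def by simp
  let ?h = "\<lambda>f. PP (Ev z f)"
  have h: "is_hom M N ?h" by (rule hom_comp[OF Evh P_hom])
  have Jk: "J \<subseteq> {x \<in> lcarrier M. ?h x = lzero N}"
  proof (rule J_least[OF kernel_ideal[OF m.nalg_axioms nn.nalg_axioms h]])
    show "lie_relations M \<subseteq> {x \<in> lcarrier M. ?h x = lzero N}"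
    proof
      fix r assume "r \<in> lie_relations M"
      then consider (a) a where "a \<in> lcarrier M" "r = m.br a a"
        | (b) a b c where "a \<in> lcarrier M" "b \<in> lcarrier M" "c \<in> lcarrier M"
            "r = m.pl (m.pl (m.br a (m.br b c)) (m.br b (m.br c a))) (m.br c (m.br a b))"
        unfolding lie_relations_def by blast
      then show "r \<in> {x \<in> lcarrier M. ?h x = lzero N}"
      proof cases
        case a then show ?thesis using is_homD[OF h] by simp
      next
        case b then show ?thesis using is_homD[OF h] nn.jacobi by simp
      qed
    qed
  qed
  have hJ: "\<And>x. x \<in> J \<Longrightarrow> ?h x = lzero N" using Jk by blast
  let ?h1 = "\<lambda>A. ?h (lrep A)"
  have h1: "is_hom FL N ?h1" using q1.factor(1)[OF nn.nalg_axioms h hJ] .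
  have h1e: "\<And>f. f \<in> lcarrier M \<Longrightarrow> ?h1 (q1.pj f) = ?h f"
    using q1.factor(2)[OF nn.nalg_axioms h hJ] .
  have h1K: "\<And>x. x \<in> K \<Longrightarrow> ?h1 x = lzero N"
    using hom_lcs[OF fl.nalg_axioms nn.nalg_axioms h1, of "Suc t"] N_nilpotent by blast
  let ?h2 = "\<lambda>B. ?h1 (lrep B)"
  have h2: "is_hom N N ?h2" using q2.factor(1)[OF nn.nalg_axioms h1 h1K] .
  have h2e: "\<And>A. A \<in> lcarrier FL \<Longrightarrow> ?h2 (q2.pj A) = ?h1 A"
    using q2.factor(2)[OF nn.nalg_axioms h1 h1K] .
  have "\<forall>f\<in>lcarrier M. ?h2 (PP f) = PP (Ev z f)"
  proof
    fix f assume f: "f \<in> lcarrier M"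
    have e: "PP f = q2.pj (q1.pj f)" by (simp only: PP_def)
    have "?h2 (PP f) = ?h1 (q1.pj f)" unfolding e using h2e[of "q1.pj f"] f by simp
    also have "\<dots> = PP (Ev z f)" using h1e f by simp
    finally show "?h2 (PP f) = PP (Ev z f)" .
  qed
  then show ?thesis using h2 by blast
qed

lemma generation:
  assumes L': "nalg L'" and g1: "is_hom N L' g1" and g2: "is_hom N L' g2"
    and eq: "\<And>i. i < d \<Longrightarrow> g1 (XX i) = g2 (XX i)"
    and x: "x \<in> lcarrier N"
  shows "g1 x = g2 x"
proof -
  interpret B: nalg L' by fact
  have G1: "is_hom M L' (\<lambda>f. g1 (PP f))" by (rule hom_comp[OF P_hom g1])
  have G2: "is_hom M L' (\<lambda>f. g2 (PP f))" by (rule hom_comp[OF P_hom g2])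
  let ?W = "{f \<in> lcarrier M. g1 (PP f) = g2 (PP f)}"
  have z1: "g1 (PP (m.zr)) = lzero L'" by (rule lin_zero[OF m.nalg_axioms L' is_homD(5)[OF G1]])
  have z2: "g2 (PP (m.zr)) = lzero L'" by (rule lin_zero[OF m.nalg_axioms L' is_homD(5)[OF G2]])
  have W: "subspace_of (free_magma_alg d) ?W"
    unfolding M_def[symmetric] subspace_of_def using z1 z2 is_homD[OF G1] is_homD[OF G2] by auto
  have "lcarrier (free_magma_alg d) \<subseteq> ?W"
  proof (rule M_gen_all[OF W])
    fix a b assume "a \<in> ?W" "b \<in> ?W"
    then show "lbr (free_magma_alg d) a b \<in> ?W"
      unfolding M_def[symmetric] using is_homD[OF G1] is_homD[OF G2] by auto
  next
    fix i assume "i < d"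
    then show "dl (Leaf i) \<in> ?W" using eq[of i] dl_carrier_M[of "Leaf i"] unfolding XX_def by auto
  qed
  then have sub: "lcarrier M \<subseteq> ?W" unfolding M_def .
  obtain f where f: "f \<in> lcarrier M" "x = PP f" using x P_surj by (metis imageE)
  then show ?thesis using sub by blast
qed

lemma P_dl_lcs: "leaves s \<subseteq> {..<d} \<Longrightarrow> PP (dl s) \<in> lcs N (lc s)"
proof (induction s)
  case (Leaf i)
  then show ?case using is_homD(1)[OF P_hom] dl_carrier_M[of "Leaf i"] by simp
next
  case (Node a b)
  obtain i where i: "lc a = Suc i" using lc_pos[of a] by (cases "lc a") auto
  obtain j where j: "lc b = Suc j" using lc_pos[of b] by (cases "lc b") auto
  note ij = i j
  have ca: "dl a \<in> lcarrier M" "dl b \<in> lcarrier M" using Node.prems dl_carrier_M by auto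
  have "nn.br (PP (dl a)) (PP (dl b)) \<in> lcs N (Suc (Suc (i + j)))"
    using nn.lcs_bracket Node ij by simp
  moreover have "PP (dl (Node a b)) = nn.br (PP (dl a)) (PP (dl b))"
    using is_homD(4)[OF P_hom ca] dl_br_M[of a b] by simp
  ultimately show ?case using ij by simp
qed

lemma spanning:
  assumes W: "subspace_of N W"
    and gen: "\<And>s. leaves s \<subseteq> {..<d} \<Longrightarrow> lc s \<le> t \<Longrightarrow> PP (dl s) \<in> W"
  shows "lcarrier N \<subseteq> W"
proof -
  let ?W = "{f \<in> lcarrier M. PP f \<in> W}"
  have sW: "subspace_of M ?W"
    by (rule lin_preimage_subspace[OF m.nalg_axioms nn.nalg_axioms is_homD(5)[OF P_hom] W])
  have "lcarrier (free_magma_alg d) \<subseteq> ?W"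
  proof (rule M_span_all)
    show "subspace_of (free_magma_alg d) ?W" using sW unfolding M_def .
    fix s assume s: "leaves s \<subseteq> {..<d}"
    have sc: "dl s \<in> lcarrier M" using dl_carrier_M[OF s] .
    show "dl s \<in> ?W"
    proof (cases "lc s \<le> t")
      case True then show ?thesis using gen s sc by simp
    next
      case False
      then have "lcs N (lc s) \<subseteq> lcs N (Suc t)" by (intro nn.lcs_antimono) simp
      then have "PP (dl s) = lzero N" using P_dl_lcs[OF s] N_nilpotent by auto
      then show ?thesis using sc nn.subspaceD(2)[OF W] by simp
    qed
  qed
  then have sub: "lcarrier M \<subseteq> ?W" unfolding M_def .
  show ?thesis
  proof
    fix x assume "x \<in> lcarrier N"
    then obtain f where f: "f \<in> lcarrier M" "x = PP f" using P_surj by (metis imageE)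
    then show "x \<in> W" using sub by blast
  qed
qed

end


definition module_of :: "('k::field, 'a) alg \<Rightarrow> ('k, 'a) module" where
  "module_of L = \<lparr>carrier = lcarrier L, monoid.mult = (\<lambda>x y. x), one = lzero L,
     ring.zero = lzero L, ring.add = ladd L, module.smult = lsmult L\<rparr>"

lemma module_of_simps[simp]:
  "carrier (module_of L) = lcarrier L" "ring.zero (module_of L) = lzero L"
  "ring.add (module_of L) = ladd L" "module.smult (module_of L) = lsmult L"
  by (simp_all add: module_of_def)

lemma (in nalg) vs: "vectorspace (class_ring :: 'k ring) (module_of L)"
proof -
  have neg: "\<forall>v\<in>C. \<exists>w\<in>C. pl v w = zr" using add_neg sm_cl by blast
  have "module (class_ring :: 'k ring) (module_of L)"
  proof (rule module_criteria)
    show "cring (class_ring :: 'k ring)" by (rule class_cring.cring_axioms)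
  qed (use neg in \<open>auto simp: add_ac sm_add add_sm\<close>)
  then show ?thesis unfolding vectorspace_def using class_field by auto
qed

lemma (in nalg) submodule_subspace:
  "submodule (class_ring :: 'k ring) W (module_of L) \<Longrightarrow> subspace_of L W"
  unfolding submodule_def subspace_of_def by auto

lemma (in nalg) subspace_submodule:
  "subspace_of L W \<Longrightarrow> submodule (class_ring :: 'k ring) W (module_of L)"
  unfolding submodule_def subspace_of_def using vs vectorspace_def by auto

lemma (in nalg) hopf:
  assumes A: "finite A" "A \<subseteq> C" and gen: "\<And>W. subspace_of L W \<Longrightarrow> A \<subseteq> W \<Longrightarrow> C \<subseteq> W"
    and f: "is_lin L L f" and surj: "f ` C = C"
  shows "inj_on f C"
proof -
  let ?V = "module_of L"
  let ?K = "class_ring :: 'k ring"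
  interpret V: vectorspace ?K ?V by (rule vs)
  have spanC: "\<And>S. S \<subseteq> C \<Longrightarrow> V.span S \<subseteq> C"
    using V.span_closed by auto
  have span_sub: "\<And>S. S \<subseteq> C \<Longrightarrow> subspace_of L (V.span S)"
    using V.span_is_submodule submodule_subspace by simp
  have "C \<subseteq> V.span A" using gen[OF span_sub[OF A(2)]] V.in_own_span A(2) by simp
  then have genA: "V.gen_set A" using spanC[OF A(2)] by auto
  then have fd: "V.fin_dim" unfolding V.fin_dim_def using A by auto
  obtain B where B: "finite B" "V.basis B" using V.finite_basis_exists[OF fd] by auto
  have BC: "B \<subseteq> C" and genB: "V.gen_set B" using B(2) unfolding V.basis_def by auto
  have dimB: "V.dim = card B" using V.dim_basis B by auto
  have fBC: "f ` B \<subseteq> C" using BC is_linD(1)[OF f] by auto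
  have fl: "is_lin L L f" by fact
  have preim: "subspace_of L {x \<in> C. f x \<in> V.span (f ` B)}"
    by (rule lin_preimage_subspace[OF nalg_axioms nalg_axioms f span_sub[OF fBC]])
  have "B \<subseteq> {x \<in> C. f x \<in> V.span (f ` B)}" using BC V.in_own_span fBC by auto
  then have "V.span B \<subseteq> {x \<in> C. f x \<in> V.span (f ` B)}"
    using V.span_is_subset subspace_submodule[OF preim] by blast
  then have sub: "C \<subseteq> {x \<in> C. f x \<in> V.span (f ` B)}" using genB by simp
  have "C \<subseteq> V.span (f ` B)"
  proof
    fix x assume "x \<in> C"
    then obtain y where y: "y \<in> C" "x = f y" using surj by (metis imageE)
    then show "x \<in> V.span (f ` B)" using sub by blast
  qed
  then have genfB: "V.gen_set (f ` B)" using spanC[OF fBC] by auto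
  have "card (f ` B) \<ge> V.dim" using V.gen_ge_dim[of "f ` B"] fBC genfB B(1) by simp
  moreover have "card (f ` B) \<le> card B" using card_image_le[OF B(1)] .
  ultimately have cardeq: "card (f ` B) = card B" using dimB by simp
  have injB: "inj_on f B" using eq_card_imp_inj_on[OF B(1) cardeq] .
  have basis_fB: "V.basis (f ` B)" using V.dim_gen_is_basis[of "f ` B"] fBC genfB B(1) cardeq dimB by simp
  then have li: "V.lin_indpt (f ` B)" unfolding V.basis_def by simp
  have fh: "f \<in> module_hom ?K ?V ?V"
    unfolding module_hom_def using is_linD[OF f] by auto
  interpret H: mod_hom ?K ?V ?V f by unfold_locales (rule fh)
  have ker: "\<And>x. x \<in> C \<Longrightarrow> f x = zr \<Longrightarrow> x = zr"
  proof -
    fix x assume x: "x \<in> C" and fx: "f x = zr"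
    obtain a where a: "a \<in> B \<rightarrow> carrier ?K" "V.lincomb a B = x"
      using V.finite_in_span[of B x] B(1) BC x genB by auto
    let ?b = "\<lambda>w. a (the_inv_into B f w)"
    have "f x = f (finsum ?V (\<lambda>v. a v \<odot>\<^bsub>?V\<^esub> v) B)" using a unfolding V.lincomb_def by simp
    also have "\<dots> = finsum ?V (\<lambda>v. f (a v \<odot>\<^bsub>?V\<^esub> v)) B"
      by (rule H.hom_sum) (use BC in auto)
    also have "\<dots> = finsum ?V (\<lambda>v. ?b (f v) \<odot>\<^bsub>?V\<^esub> f v) B"
      by (rule V.finsum_cong') (use BC injB is_linD[OF f] in \<open>auto simp: the_inv_into_f_f subset_iff\<close>)
    also have "\<dots> = finsum ?V (\<lambda>w. ?b w \<odot>\<^bsub>?V\<^esub> w) (f ` B)"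
      by (rule V.add.finprod_reindex[symmetric]) (use fBC injB in auto)
    also have "\<dots> = V.lincomb ?b (f ` B)" unfolding V.lincomb_def by simp
    finally have lc0: "V.lincomb ?b (f ` B) = zr" using fx by simp
    have "\<forall>w\<in>f ` B. ?b w = 0"
    proof (rule ccontr)
      assume "\<not> (\<forall>w\<in>f ` B. ?b w = 0)"
      then obtain w where "w \<in> f ` B" "?b w \<noteq> 0" by auto
      then have "V.lin_dep (f ` B)" unfolding V.lin_dep_def using B(1) lc0
        by (intro exI[of _ "f ` B"] exI[of _ ?b] exI[of _ w]) auto
      then show False using li by simp
    qed
    then have a0: "\<forall>v\<in>B. a v = 0" using injB the_inv_into_f_f by fastforce
    have "x = finsum ?V (\<lambda>v. a v \<odot>\<^bsub>?V\<^esub> v) B" using a unfolding V.lincomb_def by simp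
    also have "\<dots> = finsum ?V (\<lambda>v. \<zero>\<^bsub>?V\<^esub>) B"
      by (rule V.finsum_cong') (use BC a0 in auto)
    also have "\<dots> = zr" by simp
    finally show "x = zr" .
  qed
  show ?thesis
  proof (rule inj_onI)
    fix x y assume x: "x \<in> C" and y: "y \<in> C" and e: "f x = f y"
    have "f (lsub L x y) = lsub L (f x) (f y)"
      by (rule lin_sub[OF nalg_axioms nalg_axioms f x y])
    also have "\<dots> = zr" using e is_linD(1)[OF f y] by simp
    finally have "lsub L x y = zr" using ker x y by simp
    then show "x = y" using sub_eq_zero_iff x y by simp
  qed
qed


definition ss :: "('k::field, 'a) alg \<Rightarrow> 'a set \<Rightarrow> 'a set \<Rightarrow> 'a set" where
  "ss L A B = {ladd L a b | a b. a \<in> A \<and> b \<in> B}"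

context lie begin

lemma ss_subspace:
  assumes A: "subspace_of L A" and B: "subspace_of L B"
  shows "subspace_of L (ss L A B)"
  unfolding subspace_of_def
proof (intro conjI ballI allI)
  have AC: "A \<subseteq> C" and BC: "B \<subseteq> C" using A B subspaceD by auto
  show "ss L A B \<subseteq> C" unfolding ss_def using AC BC by auto
  show "zr \<in> ss L A B" unfolding ss_def using subspaceD(2)[OF A] subspaceD(2)[OF B]
    by (intro CollectI exI[of _ zr]) simp
  fix x y assume x: "x \<in> ss L A B" and y: "y \<in> ss L A B"
  obtain a b where ab: "a \<in> A" "b \<in> B" "x = pl a b" using x unfolding ss_def by auto
  obtain a' b' where ab': "a' \<in> A" "b' \<in> B" "y = pl a' b'" using y unfolding ss_def by auto
  have C: "a \<in> C" "b \<in> C" "a' \<in> C" "b' \<in> C" using ab ab' AC BC by auto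
  have "pl x y = pl (pl a a') (pl b b')" using ab ab' C by (simp add: add_ac)
  then show "pl x y \<in> ss L A B" unfolding ss_def
    using subspaceD(3)[OF A ab(1) ab'(1)] subspaceD(3)[OF B ab(2) ab'(2)] by blast
next
  have AC: "A \<subseteq> C" and BC: "B \<subseteq> C" using A B subspaceD by auto
  fix c x assume x: "x \<in> ss L A B"
  obtain a b where ab: "a \<in> A" "b \<in> B" "x = pl a b" using x unfolding ss_def by auto
  have "sm c x = pl (sm c a) (sm c b)" using ab AC BC by (simp add: sm_add subset_iff)
  then show "sm c x \<in> ss L A B" unfolding ss_def
    using subspaceD(4)[OF A ab(1)] subspaceD(4)[OF B ab(2)] by blast
qed

lemma nil_surj:
  assumes nil: "lcs L (Suc t) = {zr}" and h: "is_hom L L \<Phi>"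
    and T: "T \<subseteq> lcs L (Suc (Suc 0))"
    and cov: "\<And>x. x \<in> C \<Longrightarrow> \<exists>y\<in>C. lsub L x (\<Phi> y) \<in> T"
  shows "\<Phi> ` C = C"
proof -
  have hC: "\<And>x. x \<in> C \<Longrightarrow> \<Phi> x \<in> C" using is_homD(1)[OF h] .
  have hl: "\<And>k. \<Phi> ` lcs L k \<subseteq> lcs L k" using hom_lcs[OF nalg_axioms nalg_axioms h] .
  have base: "\<And>x. x \<in> C \<Longrightarrow> \<exists>a'\<in>C. \<exists>u\<in>lcs L (Suc (Suc 0)). x = pl (\<Phi> a') u"
  proof -
    fix x assume x: "x \<in> C"
    obtain y where y: "y \<in> C" "lsub L x (\<Phi> y) \<in> T" using cov[OF x] by blast
    have "x = pl (\<Phi> y) (lsub L x (\<Phi> y))" using sub_decomp[OF x hC[OF y(1)]] by simp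
    then show "\<exists>a'\<in>C. \<exists>u\<in>lcs L (Suc (Suc 0)). x = pl (\<Phi> a') u" using y T by blast
  qed
  have claim1: "\<And>w. w \<in> lcs L (Suc k) \<Longrightarrow>
      \<exists>w'\<in>lcs L (Suc k). \<exists>w2\<in>lcs L (Suc (Suc k)). w = pl (\<Phi> w') w2" for k
  proof (induction k)
    case 0
    then show ?case using base by simp
  next
    case (Suc k)
    let ?V = "ss L (\<Phi> ` lcs L (Suc (Suc k))) (lcs L (Suc (Suc (Suc k))))"
    have sV: "subspace_of L ?V"
      by (rule ss_subspace[OF lin_image_subspace[OF nalg_axioms nalg_axioms is_homD(5)[OF h] lcs_subspace] lcs_subspace])
    have "lcs L (Suc (Suc k)) \<subseteq> ?V"
    proof (rule lcs_SS_least[OF sV])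
      fix a y assume a: "a \<in> C" and y: "y \<in> lcs L (Suc k)"
      obtain a' u where au: "a' \<in> C" "u \<in> lcs L (Suc (Suc 0))" "a = pl (\<Phi> a') u" using base[OF a] by blast
      obtain y' w where yw: "y' \<in> lcs L (Suc k)" "w \<in> lcs L (Suc (Suc k))" "y = pl (\<Phi> y') w"
        using Suc.IH[OF y] by blast
      have uC: "u \<in> C" using au lcs_carrier by auto
      have y'C: "y' \<in> C" using yw lcs_carrier by auto
      have wC: "w \<in> C" using yw lcs_carrier by auto
      have pa: "\<Phi> a' \<in> C" "\<Phi> y' \<in> C" using hC au y'C by auto
      have e1: "br a y = pl (br (\<Phi> a') (\<Phi> y')) (pl (br (\<Phi> a') w) (pl (br u (\<Phi> y')) (br u w)))"
        unfolding au(3) yw(3) using pa uC wC by (simp add: br_add_l br_add_r add_assoc add_lcomm)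
      have t1: "br (\<Phi> a') (\<Phi> y') \<in> \<Phi> ` lcs L (Suc (Suc k))"
        using is_homD(4)[OF h au(1) y'C] lcs_br[OF au(1) yw(1)] by (metis image_eqI)
      have t2: "br (\<Phi> a') w \<in> lcs L (Suc (Suc (Suc k)))" using lcs_br[OF pa(1) yw(2)] .
      have py: "\<Phi> y' \<in> lcs L (Suc k)" using hl yw(1) by blast
      have t3: "br u (\<Phi> y') \<in> lcs L (Suc (Suc (Suc k)))"
        using lcs_bracket[OF au(2) py] by simp
      have t4: "br u w \<in> lcs L (Suc (Suc (Suc k)))" using lcs_br[OF uC yw(2)] .
      have "pl (br (\<Phi> a') w) (pl (br u (\<Phi> y')) (br u w)) \<in> lcs L (Suc (Suc (Suc k)))"
        using t2 t3 t4 subspaceD(3)[OF lcs_subspace] by blast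
      then show "br a y \<in> ?V" unfolding ss_def e1 using t1 by blast
    qed
    then show ?case using Suc.prems unfolding ss_def by blast
  qed
  have claim2: "\<And>x. x \<in> C \<Longrightarrow> \<exists>y\<in>C. \<exists>w\<in>lcs L (Suc j). x = pl (\<Phi> y) w" for j
  proof (induction j)
    case 0
    have "\<Phi> zr = zr" by (rule lin_zero[OF nalg_axioms nalg_axioms is_homD(5)[OF h]])
    then have e: "x = pl (\<Phi> zr) x" using 0 by simp
    have "x \<in> lcs L (Suc 0)" using 0 by simp
    then show ?case using e zero_cl by (intro bexI[of _ zr] bexI[of _ x])
  next
    case (Suc j)
    obtain y w where yw: "y \<in> C" "w \<in> lcs L (Suc j)" "x = pl (\<Phi> y) w" using Suc.IH[OF Suc.prems] by blast
    obtain w' w2 where ww: "w' \<in> lcs L (Suc j)" "w2 \<in> lcs L (Suc (Suc j))" "w = pl (\<Phi> w') w2"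
      using claim1[OF yw(2)] by blast
    have w'C: "w' \<in> C" using ww lcs_carrier by auto
    have w2C: "w2 \<in> C" using ww lcs_carrier by auto
    have "x = pl (\<Phi> (pl y w')) w2"
      unfolding yw(3) ww(3) using yw(1) w'C w2C hC is_homD(2)[OF h yw(1) w'C] by (simp add: add_assoc)
    then show ?case using yw(1) w'C ww(2) by blast
  qed
  show ?thesis
  proof
    show "\<Phi> ` C \<subseteq> C" using hC by auto
    show "C \<subseteq> \<Phi> ` C"
    proof
      fix x assume x: "x \<in> C"
      obtain y w where yw: "y \<in> C" "w \<in> lcs L (Suc t)" "x = pl (\<Phi> y) w" using claim2[OF x] by blast
      then have "x = \<Phi> y" using nil hC by simp
      then show "x \<in> \<Phi> ` C" using yw by blast
    qed
  qed
qed

end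

lemma BijGroup_simps:
  "carrier (BijGroup S) = Bij S"
  "f \<in> Bij S \<Longrightarrow> g \<in> Bij S \<Longrightarrow> monoid.mult (BijGroup S) f g = compose S f g"
  "monoid.one (BijGroup S) = (\<lambda>x\<in>S. x)"
  by (simp_all add: BijGroup_def)

lemma hom_cong:
  assumes L: "nalg L" and h: "is_hom L L' h" and e: "\<And>x. x \<in> lcarrier L \<Longrightarrow> h' x = h x"
  shows "is_hom L L' h'"
  using is_homD[OF h] e unfolding is_hom_def is_lin_def
  by (auto simp: e nalg.add_cl[OF L] nalg.sm_cl[OF L] nalg.br_cl[OF L])

context nalg begin

lemma auts_Bij: "lie_auts L \<subseteq> Bij C" unfolding lie_auts_def by auto

lemma autsD:
  assumes "f \<in> lie_auts L"
  shows "f \<in> Bij C" "bij_betw f C C" "f \<in> extensional C" "is_hom L L f"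
  using assms unfolding lie_auts_def Bij_def is_hom_def is_lin_def bij_betw_def by auto

lemma autsI:
  assumes "f \<in> extensional C" "bij_betw f C C" "is_hom L L f"
  shows "f \<in> lie_auts L"
  using assms unfolding lie_auts_def Bij_def is_hom_def is_lin_def by auto

lemma id_aut: "(\<lambda>x\<in>C. x) \<in> lie_auts L"
  by (rule autsI) (auto simp: is_hom_def is_lin_def bij_betw_def inj_on_def)

lemma comp_aut: "f \<in> lie_auts L \<Longrightarrow> g \<in> lie_auts L \<Longrightarrow> compose C f g \<in> lie_auts L"
proof -
  assume f: "f \<in> lie_auts L" and g: "g \<in> lie_auts L"
  have bf: "bij_betw f C C" and hf: "is_hom L L f" using autsD[OF f] by auto
  have bg: "bij_betw g C C" and hg: "is_hom L L g" using autsD[OF g] by auto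
  have hfg: "is_hom L L (\<lambda>x. f (g x))" by (rule hom_comp[OF hg hf])
  show ?thesis
  proof (rule autsI)
    show "compose C f g \<in> extensional C" by (simp add: compose_def)
    have b1: "bij_betw (f \<circ> g) C C" using bij_betw_trans[OF bg bf] .
    have e: "bij_betw (compose C f g) C C = bij_betw (f \<circ> g) C C"
      by (rule bij_betw_cong) (simp add: compose_def)
    show "bij_betw (compose C f g) C C" using e b1 by simp
    show "is_hom L L (compose C f g)"
      by (rule hom_cong[OF nalg_axioms hfg]) (simp add: compose_def)
  qed
qed

lemma inv_aut:
  assumes f: "f \<in> lie_auts L"
  shows "(\<lambda>x\<in>C. inv_into C f x) \<in> lie_auts L"
proof (rule autsI)
  have b: "bij_betw f C C" and h: "is_hom L L f" using autsD[OF f] by auto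
  let ?g = "inv_into C f"
  have fC: "f ` C = C" using b by (simp add: bij_betw_def)
  have gC: "\<And>x. x \<in> C \<Longrightarrow> ?g x \<in> C" using fC inv_into_into[of _ f C] by simp
  have fg: "\<And>x. x \<in> C \<Longrightarrow> f (?g x) = x" using b by (simp add: bij_betw_def f_inv_into_f)
  have gf: "\<And>x. x \<in> C \<Longrightarrow> ?g (f x) = x" using b by (simp add: bij_betw_def inv_into_f_f)
  show "(\<lambda>x\<in>C. ?g x) \<in> extensional C" by simp
  show "bij_betw (\<lambda>x\<in>C. ?g x) C C"
    using restrict_inv_into_Bij[OF autsD(1)[OF f]] unfolding Bij_def by simp
  show "is_hom L L (\<lambda>x\<in>C. ?g x)"
    unfolding is_hom_def is_lin_def
  proof (intro conjI ballI allI)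
    fix x assume x: "x \<in> C"
    show "(\<lambda>x\<in>C. ?g x) x \<in> C" using gC x by simp
    fix y assume y: "y \<in> C"
    have "?g (pl x y) = ?g (f (pl (?g x) (?g y)))" using is_homD(2)[OF h gC[OF x] gC[OF y]] fg x y by simp
    also have "\<dots> = pl (?g x) (?g y)" using gf gC x y by simp
    finally show "(\<lambda>x\<in>C. ?g x) (pl x y) = pl ((\<lambda>x\<in>C. ?g x) x) ((\<lambda>x\<in>C. ?g x) y)" using x y by simp
    have "?g (br x y) = ?g (f (br (?g x) (?g y)))" using is_homD(4)[OF h gC[OF x] gC[OF y]] fg x y by simp
    also have "\<dots> = br (?g x) (?g y)" using gf gC x y by simp
    finally show "(\<lambda>x\<in>C. ?g x) (br x y) = br ((\<lambda>x\<in>C. ?g x) x) ((\<lambda>x\<in>C. ?g x) y)" using x y by simp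
  next
    fix c x assume x: "x \<in> C"
    have "?g (sm c x) = ?g (f (sm c (?g x)))" using is_homD(3)[OF h gC[OF x]] fg x by simp
    also have "\<dots> = sm c (?g x)" using gf gC x by simp
    finally show "(\<lambda>x\<in>C. ?g x) (sm c x) = sm c ((\<lambda>x\<in>C. ?g x) x)" using x by simp
  qed
qed

lemma subgroup_auts:
  assumes sub: "H \<subseteq> lie_auts L" and one: "(\<lambda>x\<in>C. x) \<in> H"
    and comp: "\<And>f g. f \<in> H \<Longrightarrow> g \<in> H \<Longrightarrow> compose C f g \<in> H"
    and inv: "\<And>f. f \<in> H \<Longrightarrow> (\<lambda>x\<in>C. inv_into C f x) \<in> H"
  shows "subgroup H (BijGroup C)"
proof (rule group.subgroupI[OF group_BijGroup])
  show "H \<subseteq> carrier (BijGroup C)" using sub auts_Bij by (auto simp: BijGroup_simps)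
  show "H \<noteq> {}" using one by auto
  fix a assume a: "a \<in> H"
  have "a \<in> Bij C" using a sub auts_Bij by auto
  then show "inv\<^bsub>BijGroup C\<^esub> a \<in> H" using inv[OF a] by (subst inv_BijGroup) auto
  fix b assume b: "b \<in> H"
  have "a \<in> Bij C" "b \<in> Bij C" using a b sub auts_Bij by auto
  then show "a \<otimes>\<^bsub>BijGroup C\<^esub> b \<in> H" using comp[OF a b] by (simp add: BijGroup_simps)
qed

lemma group_Aut: "group (Aut L)"
proof -
  have "subgroup (lie_auts L) (BijGroup C)"
    by (rule subgroup_auts) (auto simp: id_aut comp_aut inv_aut)
  then show ?thesis unfolding Aut_def by (rule subgroup.subgroup_is_group[OF _ group_BijGroup])
qed

end


lemma (in lie) lie_ideal_two_sided: "lie_ideal L I \<Longrightarrow> two_sided_ideal L I"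
  unfolding lie_ideal_def two_sided_ideal_def
proof (intro conjI ballI; (elim conjE)?)
  fix x y assume s: "subspace_of L I" and b: "\<forall>x\<in>C. \<forall>y\<in>I. br x y \<in> I" and x: "x \<in> C" and y: "y \<in> I"
  have yC: "y \<in> C" using y subspaceD(1)[OF s] by auto
  show "br x y \<in> I" using b x y by simp
  show "br y x \<in> I" using antisym[OF x yC] b x y subspaceD(4)[OF s] by simp
qed auto

locale mainctx = fnil d t M for d t and M :: "('k::field, tree \<Rightarrow> 'k) alg" +
  fixes T :: "(tree \<Rightarrow> 'k) set set set"
  assumes T_ideal: "lie_ideal N T" and T_sub: "T \<subseteq> lcs N (Suc (Suc 0))"

sublocale mainctx \<subseteq> nq: nquot N T
  by unfold_locales (rule nn.lie_ideal_two_sided[OF T_ideal])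

sublocale mainctx \<subseteq> qq: lie "lie_quot N T"
  by (rule nq.lie_Q[OF nn.lie_axioms])

context mainctx begin

declare q1.Q_carrier[simp del] q2.Q_carrier[simp del] nq.Q_carrier[simp del]

abbreviation "Q \<equiv> lie_quot N T"
abbreviation "CN \<equiv> lcarrier N"
abbreviation "CQ \<equiv> lcarrier Q"

definition AN :: "(tree \<Rightarrow> 'k) set set set" where
  "AN = (\<lambda>s. PP (dl s)) ` {s. leaves s \<subseteq> {..<d} \<and> lc s \<le> t}"

lemma AN_fin: "finite AN" unfolding AN_def using finite_trees by simp

lemma AN_C: "AN \<subseteq> CN"
  unfolding AN_def using is_homD(1)[OF P_hom] dl_carrier_M by auto

lemma AN_gen: "subspace_of N W \<Longrightarrow> AN \<subseteq> W \<Longrightarrow> CN \<subseteq> W"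
  by (rule spanning) (auto simp: AN_def)

lemma hopfN: "is_lin N N f \<Longrightarrow> f ` CN = CN \<Longrightarrow> inj_on f CN"
  by (rule nn.hopf[OF AN_fin AN_C AN_gen])

lemma AQ_gen: "subspace_of Q W \<Longrightarrow> nq.pj ` AN \<subseteq> W \<Longrightarrow> CQ \<subseteq> W"
proof -
  assume W: "subspace_of Q W" and A: "nq.pj ` AN \<subseteq> W"
  have s: "subspace_of N {x \<in> CN. nq.pj x \<in> W}"
    by (rule lin_preimage_subspace[OF nn.nalg_axioms qq.nalg_axioms is_homD(5)[OF nq.pj_hom] W])
  have "CN \<subseteq> {x \<in> CN. nq.pj x \<in> W}" by (rule AN_gen[OF s]) (use A AN_C in auto)
  then show "CQ \<subseteq> W" unfolding nq.Q_carrier by auto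
qed

lemma hopfQ: "is_lin Q Q f \<Longrightarrow> f ` CQ = CQ \<Longrightarrow> inj_on f CQ"
  by (rule qq.hopf[OF _ _ AQ_gen]) (use AN_fin AN_C in auto)

definition ind :: "((tree \<Rightarrow> 'k) set set \<Rightarrow> (tree \<Rightarrow> 'k) set set) \<Rightarrow> (tree \<Rightarrow> 'k) set set set \<Rightarrow> (tree \<Rightarrow> 'k) set set set" where
  "ind \<Phi> = (\<lambda>A\<in>CQ. nq.pj (\<Phi> (lrep A)))"

lemma ind_props:
  assumes h: "is_hom N N \<Phi>" and TT: "\<Phi> ` T \<subseteq> T"
  shows "is_hom Q Q (ind \<Phi>)" "\<And>x. x \<in> CN \<Longrightarrow> ind \<Phi> (nq.pj x) = nq.pj (\<Phi> x)"
proof -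
  have h1: "is_hom N Q (\<lambda>x. nq.pj (\<Phi> x))" by (rule hom_comp[OF h nq.pj_hom])
  have k: "\<And>x. x \<in> T \<Longrightarrow> nq.pj (\<Phi> x) = lzero Q"
    using TT nq.pj_zero_iff' nq.I_C by blast
  have f1: "is_hom Q Q (\<lambda>A. nq.pj (\<Phi> (lrep A)))" using nq.factor(1)[OF qq.nalg_axioms h1 k] .
  have f2: "\<And>x. x \<in> CN \<Longrightarrow> nq.pj (\<Phi> (lrep (nq.pj x))) = nq.pj (\<Phi> x)"
    using nq.factor(2)[OF qq.nalg_axioms h1 k] .
  show "is_hom Q Q (ind \<Phi>)" by (rule hom_cong[OF qq.nalg_axioms f1]) (simp add: ind_def)
  show "\<And>x. x \<in> CN \<Longrightarrow> ind \<Phi> (nq.pj x) = nq.pj (\<Phi> x)" using f2 by (simp add: ind_def)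
qed

lemma ind_aut:
  assumes f: "\<Phi> \<in> lie_auts N" and TT: "\<Phi> ` T \<subseteq> T"
  shows "ind \<Phi> \<in> lie_auts Q"
proof -
  have h: "is_hom N N \<Phi>" and b: "bij_betw \<Phi> CN CN" using nn.autsD[OF f] by auto
  note ip = ind_props[OF h TT]
  have surj: "ind \<Phi> ` CQ = CQ"
  proof
    show "ind \<Phi> ` CQ \<subseteq> CQ" using is_homD(1)[OF ip(1)] by auto
    show "CQ \<subseteq> ind \<Phi> ` CQ"
    proof
      fix A assume "A \<in> CQ"
      then obtain y where y: "y \<in> CN" "A = nq.pj y" unfolding nq.Q_carrier by auto
      have "y \<in> \<Phi> ` CN" using b y(1) unfolding bij_betw_def by simp
      then obtain x where x: "x \<in> CN" "y = \<Phi> x" by (rule imageE) simp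
      have "A = ind \<Phi> (nq.pj x)" using ip(2)[OF x(1)] x y by simp
      then show "A \<in> ind \<Phi> ` CQ" using x(1) by simp
    qed
  qed
  show ?thesis
  proof (rule qq.autsI)
    show "ind \<Phi> \<in> extensional CQ" by (simp add: ind_def)
    show "bij_betw (ind \<Phi>) CQ CQ" unfolding bij_betw_def
      using surj hopfQ[OF is_homD(5)[OF ip(1)] surj] by simp
    show "is_hom Q Q (ind \<Phi>)" by (rule ip(1))
  qed
qed

lemma inv_T:
  assumes f: "\<Phi> \<in> lie_auts N" and TT: "\<Phi> ` T \<subseteq> T"
  shows "(\<lambda>x\<in>CN. inv_into CN \<Phi> x) ` T \<subseteq> T"
proof
  fix y assume "y \<in> (\<lambda>x\<in>CN. inv_into CN \<Phi> x) ` T"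
  then obtain u where u: "u \<in> T" "y = (\<lambda>x\<in>CN. inv_into CN \<Phi> x) u" by auto
  have h: "is_hom N N \<Phi>" and b: "bij_betw \<Phi> CN CN" using nn.autsD[OF f] by auto
  have uC: "u \<in> CN" using u nq.I_C by auto
  have yC: "y \<in> CN" and Py: "\<Phi> y = u" using u uC b
    by (auto simp: bij_betw_def inv_into_into f_inv_into_f)
  note ip = ind_props[OF h TT]
  have ia: "ind \<Phi> \<in> lie_auts Q" by (rule ind_aut[OF f TT])
  have inj: "inj_on (ind \<Phi>) CQ" using qq.autsD(2)[OF ia] unfolding bij_betw_def by simp
  have "ind \<Phi> (nq.pj y) = nq.pj u" using ip(2)[OF yC] Py by simp
  also have "\<dots> = lzero Q" using nq.pj_zero_iff' uC u by simp
  also have "\<dots> = ind \<Phi> (lzero Q)"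
    using lin_zero[OF qq.nalg_axioms qq.nalg_axioms is_homD(5)[OF ip(1)]] by simp
  finally have "nq.pj y = lzero Q" using inj_onD[OF inj _ nq.pj_C[OF yC] qq.zero_cl] by simp
  then show "y \<in> T" using nq.pj_zero_iff' yC by simp
qed

definition HT :: "((tree \<Rightarrow> 'k) set set \<Rightarrow> (tree \<Rightarrow> 'k) set set) set" where
  "HT = {\<Phi> \<in> lie_auts N. \<Phi> ` T \<subseteq> T}"

lemma Aut_t_eq: "Aut_t N T = (BijGroup CN)\<lparr>carrier := HT\<rparr>"
  unfolding Aut_t_def Aut_def HT_def by simp

lemma HT_subgroup: "subgroup HT (BijGroup CN)"
proof (rule nn.subgroup_auts)
  show "HT \<subseteq> lie_auts N" unfolding HT_def by auto
  show "(\<lambda>x\<in>CN. x) \<in> HT" unfolding HT_def using nn.id_aut nq.I_C by auto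
  fix f g assume f: "f \<in> HT" and g: "g \<in> HT"
  have "compose CN f g ` T \<subseteq> T"
  proof
    fix y assume "y \<in> compose CN f g ` T"
    then obtain u where u: "u \<in> T" "y = compose CN f g u" by auto
    have "u \<in> CN" using u nq.I_C by auto
    then have "y = f (g u)" using u by (simp add: compose_def)
    moreover have "g u \<in> T" using g u unfolding HT_def by auto
    ultimately show "y \<in> T" using f unfolding HT_def by auto
  qed
  then show "compose CN f g \<in> HT" using nn.comp_aut f g unfolding HT_def by auto
next
  fix f assume f: "f \<in> HT"
  have f1: "f \<in> lie_auts N" "f ` T \<subseteq> T" using f unfolding HT_def by auto
  have "(\<lambda>x\<in>CN. inv_into CN f x) \<in> lie_auts N" using nn.inv_aut[OF f1(1)] .
  moreover have "(\<lambda>x\<in>CN. inv_into CN f x) ` T \<subseteq> T" using inv_T[OF f1] .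
  ultimately show "(\<lambda>x\<in>CN. inv_into CN f x) \<in> HT" unfolding HT_def by blast
qed

lemma group_Aut_t: "group (Aut_t N T)"
  unfolding Aut_t_eq by (rule subgroup.subgroup_is_group[OF HT_subgroup group_BijGroup])

lemma ind_comp:
  assumes f: "f \<in> HT" and g: "g \<in> HT"
  shows "ind (compose CN f g) = compose CQ (ind f) (ind g)"
proof
  fix A
  have hf: "is_hom N N f" "f ` T \<subseteq> T" using f nn.autsD unfolding HT_def by auto
  have hg: "is_hom N N g" "g ` T \<subseteq> T" using g nn.autsD unfolding HT_def by auto
  show "ind (compose CN f g) A = compose CQ (ind f) (ind g) A"
  proof (cases "A \<in> CQ")
    case True
    have r: "lrep A \<in> CN" using nq.rep_carrier True by simp
    have gr: "g (lrep A) \<in> CN" using is_homD(1)[OF hg(1) r] .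
    have igA: "ind g A = nq.pj (g (lrep A))" using True unfolding ind_def by simp
    have "ind f (ind g A) = nq.pj (f (g (lrep A)))" by (simp only: igA ind_props(2)[OF hf gr])
    moreover have "compose CQ (ind f) (ind g) A = ind f (ind g A)" using True by (simp add: compose_def)
    moreover have "ind (compose CN f g) A = nq.pj (f (g (lrep A)))"
      using True r unfolding ind_def by (simp add: compose_def)
    ultimately show ?thesis by simp
  next
    case False
    then show ?thesis by (simp add: ind_def compose_def)
  qed
qed

lemma ind_hom: "ind \<in> hom (Aut_t N T) (Aut Q)"
  unfolding hom_def
proof (intro CollectI conjI)
  show "ind \<in> carrier (Aut_t N T) \<rightarrow> carrier (Aut Q)"
    using ind_aut unfolding Aut_t_eq HT_def by (auto simp: Aut_def)
  show "\<forall>x\<in>carrier (Aut_t N T). \<forall>y\<in>carrier (Aut_t N T).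
      ind (x \<otimes>\<^bsub>Aut_t N T\<^esub> y) = ind x \<otimes>\<^bsub>Aut Q\<^esub> ind y"
  proof (intro ballI)
    fix x y assume x: "x \<in> carrier (Aut_t N T)" and y: "y \<in> carrier (Aut_t N T)"
    have xH: "x \<in> HT" and yH: "y \<in> HT" using x y unfolding Aut_t_eq by auto
    have xB: "x \<in> Bij CN" and yB: "y \<in> Bij CN" using xH yH nn.auts_Bij unfolding HT_def by auto
    have ix: "ind x \<in> Bij CQ" and iy: "ind y \<in> Bij CQ"
      using ind_aut xH yH qq.auts_Bij unfolding HT_def by auto
    have "ind (x \<otimes>\<^bsub>Aut_t N T\<^esub> y) = ind (compose CN x y)"
      unfolding Aut_t_eq using xB yB by (simp add: BijGroup_simps)
    also have "\<dots> = compose CQ (ind x) (ind y)" by (rule ind_comp[OF xH yH])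
    also have "\<dots> = ind x \<otimes>\<^bsub>Aut Q\<^esub> ind y"
      unfolding Aut_def using ix iy by (simp add: BijGroup_simps)
    finally show "ind (x \<otimes>\<^bsub>Aut_t N T\<^esub> y) = ind x \<otimes>\<^bsub>Aut Q\<^esub> ind y" .
  qed
qed

lemma group_hom_ind: "group_hom (Aut_t N T) (Aut Q) ind"
  by (intro group_hom.intro group_hom_axioms.intro group_Aut_t qq.group_Aut ind_hom)

lemma kernel_eq: "kernel (Aut_t N T) (Aut Q) ind = Aut0_t N T"
proof -
  have one: "\<one>\<^bsub>Aut Q\<^esub> = (\<lambda>x\<in>CQ. x)" unfolding Aut_def by (simp add: BijGroup_simps)
  have key: "ind f = (\<lambda>x\<in>CQ. x) \<longleftrightarrow> (\<forall>x\<in>CN. lsub N (f x) x \<in> T)" if f: "f \<in> HT" for f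
  proof -
    have hf: "is_hom N N f" "f ` T \<subseteq> T" using f nn.autsD unfolding HT_def by auto
    note ip = ind_props[OF hf]
    show ?thesis
    proof
      assume e: "ind f = (\<lambda>x\<in>CQ. x)"
      show "\<forall>x\<in>CN. lsub N (f x) x \<in> T"
      proof
        fix x assume x: "x \<in> CN"
        have "nq.pj (f x) = nq.pj x" using ip(2)[OF x] e x by (metis nq.pj_C restrict_apply')
        then show "lsub N (f x) x \<in> T" using nq.pj_eq_iff[OF is_homD(1)[OF hf(1) x] x] by simp
      qed
    next
      assume a: "\<forall>x\<in>CN. lsub N (f x) x \<in> T"
      show "ind f = (\<lambda>x\<in>CQ. x)"
      proof
        fix A show "ind f A = (\<lambda>x\<in>CQ. x) A"
        proof (cases "A \<in> CQ")
          case True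
          then obtain x where x: "x \<in> CN" "A = nq.pj x" unfolding nq.Q_carrier by auto
          have "ind f A = nq.pj (f x)" using ip(2)[OF x(1)] x by simp
          also have "\<dots> = nq.pj x" using nq.pj_eq_iff[OF is_homD(1)[OF hf(1) x(1)] x(1)] x a by simp
          finally show ?thesis using x True by simp
        next
          case False then show ?thesis by (simp add: ind_def)
        qed
      qed
    qed
  qed
  have sub: "\<And>f. f \<in> lie_auts N \<Longrightarrow> (\<forall>x\<in>CN. lsub N (f x) x \<in> T) \<Longrightarrow> f ` T \<subseteq> T"
  proof -
    fix f assume f: "f \<in> lie_auts N" and a: "\<forall>x\<in>CN. lsub N (f x) x \<in> T"
    have hf: "is_hom N N f" using nn.autsD[OF f] by auto
    show "f ` T \<subseteq> T"
    proof
      fix y assume "y \<in> f ` T"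
      then obtain u where u: "u \<in> T" "y = f u" by auto
      have uC: "u \<in> CN" using u nq.I_C by auto
      have e: "nn.pl u (lsub N (f u) u) = f u" using nn.sub_decomp[OF is_homD(1)[OF hf uC] uC] .
      have "lsub N (f u) u \<in> T" using a uC by simp
      then have "nn.pl u (lsub N (f u) u) \<in> T" using nq.I_add[OF u(1)] by simp
      then show "y \<in> T" using e u(2) by simp
    qed
  qed
  show ?thesis
    unfolding kernel_def Aut0_t_def one
  proof (rule equalityI; rule subsetI)
    fix f assume "f \<in> {x \<in> carrier (Aut_t N T). ind x = (\<lambda>x\<in>CQ. x)}"
    then have f: "f \<in> HT" "ind f = (\<lambda>x\<in>CQ. x)" unfolding Aut_t_eq by auto
    then show "f \<in> {\<Phi> \<in> carrier (Aut N). (\<lambda>x. lsub N (\<Phi> x) x) ` CN \<subseteq> T}"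
      using key[OF f(1)] unfolding HT_def Aut_def by auto
  next
    fix f assume "f \<in> {\<Phi> \<in> carrier (Aut N). (\<lambda>x. lsub N (\<Phi> x) x) ` CN \<subseteq> T}"
    then have f: "f \<in> lie_auts N" "\<forall>x\<in>CN. lsub N (f x) x \<in> T" unfolding Aut_def by auto
    have fH: "f \<in> HT" using sub[OF f] f unfolding HT_def by simp
    then show "f \<in> {x \<in> carrier (Aut_t N T). ind x = (\<lambda>x\<in>CQ. x)}"
      using key[OF fH] f unfolding Aut_t_eq by simp
  qed
qed

end


context mainctx begin

lemma ind_surj: "ind ` carrier (Aut_t N T) = carrier (Aut Q)"
proof
  show "ind ` carrier (Aut_t N T) \<subseteq> carrier (Aut Q)"
    using ind_hom unfolding hom_def by auto
  show "carrier (Aut Q) \<subseteq> ind ` carrier (Aut_t N T)"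
  proof
    fix \<phi> assume "\<phi> \<in> carrier (Aut Q)"
    then have \<phi>: "\<phi> \<in> lie_auts Q" unfolding Aut_def by simp
    have h\<phi>: "is_hom Q Q \<phi>" and b\<phi>: "bij_betw \<phi> CQ CQ" and e\<phi>: "\<phi> \<in> extensional CQ"
      using qq.autsD[OF \<phi>] by auto
    have CQ_eq: "CQ = (\<lambda>f. nq.pj (PP f)) ` lcarrier M"
      using nq.Q_carrier P_surj by (simp add: image_image[symmetric])
    have XC: "\<And>i. i < d \<Longrightarrow> XX i \<in> CN"
      unfolding XX_def using is_homD(1)[OF P_hom] dl_carrier_M by simp
    define z where "z i = (if i < d then SOME f. f \<in> lcarrier M \<and> nq.pj (PP f) = \<phi> (nq.pj (XX i))
                           else lzero M)" for i
    have zC: "z i \<in> lcarrier M \<and> nq.pj (PP (z i)) = \<phi> (nq.pj (XX i))" if i: "i < d" for i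
    proof -
      have "\<phi> (nq.pj (XX i)) \<in> CQ" using is_homD(1)[OF h\<phi> nq.pj_C[OF XC[OF i]]] .
      then have "\<exists>f. f \<in> lcarrier M \<and> nq.pj (PP f) = \<phi> (nq.pj (XX i))" unfolding CQ_eq by auto
      then have "(SOME f. f \<in> lcarrier M \<and> nq.pj (PP f) = \<phi> (nq.pj (XX i))) \<in> lcarrier M \<and>
          nq.pj (PP (SOME f. f \<in> lcarrier M \<and> nq.pj (PP f) = \<phi> (nq.pj (XX i)))) = \<phi> (nq.pj (XX i))"
        by (rule someI_ex)
      then show ?thesis unfolding z_def using i by simp
    qed
    obtain \<Phi>0 where h0: "is_hom N N \<Phi>0" and e0: "\<forall>f\<in>lcarrier M. \<Phi>0 (PP f) = PP (Ev z f)"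
      using universal[of z] zC by blast
    have g1: "is_hom N Q (\<lambda>x. nq.pj (\<Phi>0 x))" by (rule hom_comp[OF h0 nq.pj_hom])
    have g2: "is_hom N Q (\<lambda>x. \<phi> (nq.pj x))" by (rule hom_comp[OF nq.pj_hom h\<phi>])
    have comm: "\<And>x. x \<in> CN \<Longrightarrow> nq.pj (\<Phi>0 x) = \<phi> (nq.pj x)"
    proof (rule generation[OF qq.nalg_axioms g1 g2])
      fix i assume i: "i < d"
      have "\<Phi>0 (XX i) = PP (Ev z (dl (Leaf i)))" unfolding XX_def using e0 dl_carrier_M[of "Leaf i"] i by simp
      also have "\<dots> = PP (z i)" by (simp add: Ev_dl)
      finally show "nq.pj (\<Phi>0 (XX i)) = \<phi> (nq.pj (XX i))" using zC[OF i] by simp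
    qed
    have h0C: "\<And>x. x \<in> CN \<Longrightarrow> \<Phi>0 x \<in> CN" using is_homD(1)[OF h0] .
    have cov: "\<And>x. x \<in> CN \<Longrightarrow> \<exists>y\<in>CN. lsub N x (\<Phi>0 y) \<in> T"
    proof -
      fix x assume x: "x \<in> CN"
      have "nq.pj x \<in> \<phi> ` CQ" using b\<phi> nq.pj_C[OF x] unfolding bij_betw_def by simp
      then obtain B where B: "B \<in> CQ" "nq.pj x = \<phi> B" by auto
      then obtain y where y: "y \<in> CN" "B = nq.pj y" unfolding nq.Q_carrier by auto
      have "nq.pj x = nq.pj (\<Phi>0 y)" using B y comm[OF y(1)] by simp
      then have "lsub N x (\<Phi>0 y) \<in> T" using nq.pj_eq_iff[OF x h0C[OF y(1)]] by simp
      then show "\<exists>y\<in>CN. lsub N x (\<Phi>0 y) \<in> T" using y(1) by blast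
    qed
    have surj0: "\<Phi>0 ` CN = CN" by (rule nn.nil_surj[OF N_nilpotent h0 T_sub cov])
    have inj0: "inj_on \<Phi>0 CN" by (rule hopfN[OF is_homD(5)[OF h0] surj0])
    let ?\<Phi> = "\<lambda>x\<in>CN. \<Phi>0 x"
    have aut: "?\<Phi> \<in> lie_auts N"
    proof (rule nn.autsI)
      show "?\<Phi> \<in> extensional CN" by simp
      have b0: "bij_betw \<Phi>0 CN CN" using inj0 surj0 unfolding bij_betw_def by simp
      have "bij_betw ?\<Phi> CN CN = bij_betw \<Phi>0 CN CN" by (rule bij_betw_cong) simp
      then show "bij_betw ?\<Phi> CN CN" using b0 by simp
      show "is_hom N N ?\<Phi>" by (rule hom_cong[OF nn.nalg_axioms h0]) simp
    qed
    have TT: "?\<Phi> ` T \<subseteq> T"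
    proof
      fix y assume "y \<in> ?\<Phi> ` T"
      then obtain u where u: "u \<in> T" "y = ?\<Phi> u" by auto
      have uC: "u \<in> CN" using u nq.I_C by auto
      have "nq.pj (\<Phi>0 u) = \<phi> (nq.pj u)" using comm[OF uC] .
      also have "\<dots> = \<phi> (lzero Q)" using nq.pj_zero_iff'[OF uC] u by simp
      also have "\<dots> = lzero Q" by (rule lin_zero[OF qq.nalg_axioms qq.nalg_axioms is_homD(5)[OF h\<phi>]])
      finally have "\<Phi>0 u \<in> T" using nq.pj_zero_iff'[OF h0C[OF uC]] by simp
      then show "y \<in> T" using u uC by simp
    qed
    have HT: "?\<Phi> \<in> HT" unfolding HT_def using aut TT by simp
    have "ind ?\<Phi> = \<phi>"
    proof
      fix A show "ind ?\<Phi> A = \<phi> A"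
      proof (cases "A \<in> CQ")
        case True
        have r: "lrep A \<in> CN" using nq.rep_carrier[OF True] .
        have "ind ?\<Phi> A = nq.pj (\<Phi>0 (lrep A))" using True r unfolding ind_def by simp
        also have "\<dots> = \<phi> (nq.pj (lrep A))" using comm[OF r] .
        also have "\<dots> = \<phi> A" using nq.pj_rep'[OF True] by simp
        finally show ?thesis .
      next
        case False
        then show ?thesis using e\<phi> unfolding ind_def extensional_def by simp
      qed
    qed
    then show "\<phi> \<in> ind ` carrier (Aut_t N T)" using HT unfolding Aut_t_eq by force
  qed
qed

lemma main_result: "Aut0_t N T \<lhd> Aut_t N T \<and> Aut Q \<cong> (Aut_t N T Mod Aut0_t N T)"
proof
  interpret gh: group_hom "Aut_t N T" "Aut Q" ind by (rule group_hom_ind)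
  show nrm: "Aut0_t N T \<lhd> Aut_t N T" using gh.normal_kernel kernel_eq by simp
  have "(Aut_t N T Mod Aut0_t N T) \<cong> Aut Q" using gh.FactGroup_iso[OF ind_surj] kernel_eq by simp
  moreover have "group (Aut_t N T Mod Aut0_t N T)" by (rule normal.factorgroup_is_group[OF nrm])
  ultimately show "Aut Q \<cong> (Aut_t N T Mod Aut0_t N T)" using group.iso_sym by blast
qed

end

theorem theorem2:
  fixes d t :: nat and T :: "(tree \<Rightarrow> 'k::field_char_0) set set set"
  defines "n \<equiv> (free_nilpotent d t :: ('k, (tree \<Rightarrow> 'k) set set) alg)"
  assumes "d \<ge> 2" and "t \<ge> 1"
    and "lie_ideal n T"
    and "T \<subseteq> lcs n 2"
    and "\<not> lcs n t \<subseteq> T"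
  shows "Aut0_t n T \<lhd> Aut_t n T \<and> Aut (lie_quot n T) \<cong> (Aut_t n T Mod Aut0_t n T)"
proof -
  interpret F: fnil d t "free_magma_alg d :: ('k, tree \<Rightarrow> 'k) alg" by unfold_locales simp
  have nN: "n = F.N" unfolding n_def by (rule F.N_eq)
  interpret mainctx d t "free_magma_alg d :: ('k, tree \<Rightarrow> 'k) alg" T
    by unfold_locales (use assms(4,5) nN in \<open>simp_all add: numeral_2_eq_2\<close>)
  show ?thesis using main_result nN by simp
qed


end
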